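(* Let $f\in K[z]$ be a polynomial of degree $d\ge2$ with $\mathrm{Crit}(f)\cap J(f)\neq\emptyset$. Then there exist a constant $M\ge1$ and $N\ge 1$ such that for every $c\in\mathrm{Crit}(f)\cap J(f)$ and every $n\ge N$, the iterate $f^n$ has at most $M$ critical values (in $K$) lying in the disk $D_n(c)$.
   Context: $K$ is an algebraically closed field of characteristic $0$, complete with respect to a nontrivial nonarchimedean absolute value $|\cdot|$; $D(x,r)=\{y\in K:|y-x|<r\}$. Set $p=\mathrm{res.char}(K)$ if positive and $p=e$ otherwise. $\mathsf{P}^1$ is the Berkovich projective line over $K$, $\mathsf{A}^1=\mathsf{P}^1\setminus\{\infty\}$; $\|g\|_\xi$ is the value at $g$ of the seminorm $\xi$; a point corresponding to a closed disk $\overline D(x,r)$ has $\|g\|_\xi=\sup_{\overline D(x,r)}|g|$ and $\mathrm{diam}(\xi)=r$. $\deg_\xi f$ is the local degree, $\kappa(f)=\min\{\log_p|\deg_\xi f|:\xi\in\mathsf{P}^1\}$. $\mathcal{K}(f)$ is the set of $\xi\in\mathsf{A}^1$ with $f^n(\xi)\not\to\infty$, $J(f)=\partial\mathcal{K}(f)$. $\mathrm{Crit}(f)\subset K$ is the set of zeros of $f'$; critical values of $f^n$ are images under $f^n$ of zeros of $(f^n)'$. The base point $\xi_f$ corresponds to the smallest closed disk in $K$ containing $\mathcal{K}(f)\cap K$, $R_f=\mathrm{diam}(\xi_f)$, $\Xi_f=p^{-\kappa(f)}\|f'\|_{\xi_f}$, and for $s>0$, $x\in K$: $D_s(x)=D(x,R_f\Xi_f^{-s})$.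 *)

theory Defs
  imports Complex_Main "HOL-Computational_Algebra.Polynomial" "HOL-Computational_Algebra.Primes"
begin

text \<open>K is modelled as a type of class field_char_0 together with a function absv.\<close>

definition nonarch_complete_acf :: "('a::field_char_0 \<Rightarrow> real) \<Rightarrow> bool" where
  "nonarch_complete_acf absv \<longleftrightarrow>
     (\<forall>x. absv x \<ge> 0) \<and> (\<forall>x. absv x = 0 \<longleftrightarrow> x = 0) \<and>
     (\<forall>x y. absv (x * y) = absv x * absv y) \<and>
     (\<forall>x y. absv (x + y) \<le> max (absv x) (absv y)) \<and>
     (\<exists>x. absv x \<noteq> 0 \<and> absv x \<noteq> 1) \<and>
     (\<forall>X :: nat \<Rightarrow> 'a. (\<forall>e>0. \<exists>N. \<forall>m\<ge>N. \<forall>n\<ge>N. absv (X m - X n) < e)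
          \<longrightarrow> (\<exists>L. (\<lambda>n. absv (X n - L)) \<longlonglongrightarrow> 0)) \<and>
     (\<forall>p :: 'a poly. degree p \<ge> 1 \<longrightarrow> (\<exists>z. poly p z = 0))"

text \<open>p = residue characteristic if positive, e otherwise.\<close>
definition res_p :: "('a::field_char_0 \<Rightarrow> real) \<Rightarrow> real" where
  "res_p absv = (if \<exists>q::nat. prime q \<and> absv (of_nat q) < 1
                 then real (THE q::nat. prime q \<and> absv (of_nat q) < 1) else exp 1)"

definition fiter :: "'a::comm_ring_1 poly \<Rightarrow> nat \<Rightarrow> 'a poly" where
  "fiter f n = ((\<lambda>q. pcompose f q) ^^ n) [:0, 1:]"

text \<open>Classical points of the filled Julia set K(f).\<close>
definition filledK :: "('a::field_char_0 \<Rightarrow> real) \<Rightarrow> 'a poly \<Rightarrow> 'a set" where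
  "filledK absv f = {x. \<not> filterlim (\<lambda>n. absv ((poly f ^^ n) x)) at_top sequentially}"

text \<open>Classical points of J(f) = boundary of K(f) in the Berkovich line.\<close>
definition juliaK :: "('a::field_char_0 \<Rightarrow> real) \<Rightarrow> 'a poly \<Rightarrow> 'a set" where
  "juliaK absv f = {c \<in> filledK absv f. \<forall>r>0. \<exists>y. absv (y - c) < r \<and> y \<notin> filledK absv f}"

definition crit :: "'a::field_char_0 poly \<Rightarrow> 'a set" where
  "crit f = {z. poly (pderiv f) z = 0}"

definition critvals :: "'a::field_char_0 poly \<Rightarrow> nat \<Rightarrow> 'a set" where
  "critvals f n = {poly (fiter f n) w | w. poly (pderiv (fiter f n)) w = 0}"

definition Rf :: "('a::field_char_0 \<Rightarrow> real) \<Rightarrow> 'a poly \<Rightarrow> real" where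
  "Rf absv f = Inf {r. r \<ge> 0 \<and> (\<exists>a. filledK absv f \<subseteq> {y. absv (y - a) \<le> r})}"

definition base_center :: "('a::field_char_0 \<Rightarrow> real) \<Rightarrow> 'a poly \<Rightarrow> 'a" where
  "base_center absv f = (SOME a. a \<in> filledK absv f)"

text \<open>Seminorm of the point corresponding to the closed disk of center a, radius r.\<close>
definition supnorm :: "('a::field_char_0 \<Rightarrow> real) \<Rightarrow> 'a poly \<Rightarrow> 'a \<Rightarrow> real \<Rightarrow> real" where
  "supnorm absv g a r = Sup ((\<lambda>z. absv (poly g z)) ` {z. absv (z - a) \<le> r})"

text \<open>Local degrees: at a type I point x, and at the point of the closed disk (a,r), r>0
  (for polynomials this is the number of zeros of f - f(a) in the closed disk).\<close>
definition loc_deg_pt :: "'a::field_char_0 poly \<Rightarrow> 'a \<Rightarrow> nat" where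
  "loc_deg_pt f x = order x (f - [:poly f x:])"

definition loc_deg_disk :: "('a::field_char_0 \<Rightarrow> real) \<Rightarrow> 'a poly \<Rightarrow> 'a \<Rightarrow> real \<Rightarrow> nat" where
  "loc_deg_disk absv f a r =
     (\<Sum>z\<in>{z. absv (z - a) \<le> r \<and> poly (f - [:poly f a:]) z = 0}. order z (f - [:poly f a:]))"

definition kappa :: "('a::field_char_0 \<Rightarrow> real) \<Rightarrow> 'a poly \<Rightarrow> real" where
  "kappa absv f = Min ((\<lambda>k. log (res_p absv) (absv (of_nat k))) `
      ({loc_deg_pt f x | x. True} \<union> {loc_deg_disk absv f a r | a r. r > 0}))"

definition Xi :: "('a::field_char_0 \<Rightarrow> real) \<Rightarrow> 'a poly \<Rightarrow> real" where
  "Xi absv f = res_p absv powr (- kappa absv f) *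
      supnorm absv (pderiv f) (base_center absv f) (Rf absv f)"

definition Ds :: "('a::field_char_0 \<Rightarrow> real) \<Rightarrow> 'a poly \<Rightarrow> real \<Rightarrow> 'a \<Rightarrow> 'a set" where
  "Ds absv f s x = {y. absv (y - x) < Rf absv f * Xi absv f powr (- s)}"

end

theory Submission
  imports Defs
begin

locale nav =
  fixes absv :: "'a::field_char_0 \<Rightarrow> real"
  assumes nav: "nonarch_complete_acf absv"
begin

lemma av_nonneg[simp]: "absv x \<ge> 0"
  using nav unfolding nonarch_complete_acf_def by blast

lemma av_zero_iff[simp]: "absv x = 0 \<longleftrightarrow> x = 0"
  using nav unfolding nonarch_complete_acf_def by blast

lemma av_mult: "absv (x * y) = absv x * absv y"
  using nav unfolding nonarch_complete_acf_def by blast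

lemma av_ultra: "absv (x + y) \<le> max (absv x) (absv y)"
  using nav unfolding nonarch_complete_acf_def by blast

lemma av_root: "degree (p::'a poly) \<ge> 1 \<Longrightarrow> \<exists>z. poly p z = 0"
  using nav unfolding nonarch_complete_acf_def by blast

lemma av_pos: "x \<noteq> 0 \<Longrightarrow> absv x > 0"
  using av_nonneg[of x] av_zero_iff[of x] by linarith

lemma av_0[simp]: "absv 0 = 0" by simp

lemma av_1[simp]: "absv 1 = 1"
proof -
  have "absv 1 = absv 1 * absv 1" using av_mult[of 1 1] by simp
  moreover have "absv 1 \<noteq> 0" by simp
  ultimately show ?thesis by (metis mult_cancel_left1)
qed

lemma av_minus1: "absv (-1) = 1"
proof -
  have "absv (-1) * absv (-1) = 1" using av_mult[of "-1" "-1"] by simp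
  then show ?thesis using av_nonneg[of "-1"]
    by (metis abs_of_nonneg abs_square_eq_1 power2_eq_square)
qed

lemma av_uminus[simp]: "absv (- x) = absv x"
  using av_mult[of "-1" x] av_minus1 by simp

lemma av_minus_comm: "absv (x - y) = absv (y - x)"
  by (metis av_uminus minus_diff_eq)

lemma av_diff: "absv (x - y) \<le> max (absv x) (absv y)"
  using av_ultra[of x "-y"] by simp

lemma av_tri: "absv (x + y) \<le> absv x + absv y"
  using av_ultra[of x y] av_nonneg[of x] av_nonneg[of y] by linarith

lemma av_power: "absv (x ^ n) = absv x ^ n"
  by (induction n) (auto simp: av_mult)

lemma av_divide: "absv (x / y) = absv x / absv y"
proof (cases "y = 0")
  case True then show ?thesis by simp
next
  case False
  have "absv x = absv (x / y) * absv y" using av_mult[of "x/y" y] False by simp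
  then show ?thesis using False av_pos[of y] by (simp add: field_simps)
qed

lemma av_strict: assumes "absv y < absv x" shows "absv (x + y) = absv x"
proof -
  have 1: "absv (x + y) \<le> absv x" using av_ultra[of x y] assms by simp
  have "absv x \<le> max (absv (x + y)) (absv y)" using av_diff[of "x+y" y] by simp
  then have "absv x \<le> absv (x + y)" using assms by auto
  then show ?thesis using 1 by simp
qed

lemma av_ultra3: "absv x \<le> C \<Longrightarrow> absv y \<le> C \<Longrightarrow> absv (x + y) \<le> C"
  using av_ultra[of x y] by simp

lemma av_sum_le: "finite I \<Longrightarrow> C \<ge> 0 \<Longrightarrow> (\<And>i. i \<in> I \<Longrightarrow> absv (g i) \<le> C) \<Longrightarrow> absv (sum g I) \<le> C"
proof (induction I rule: finite_induct)
  case empty then show ?case by simp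
next
  case (insert x F) then show ?case by (simp add: av_ultra3)
qed

lemma av_sum_less: "finite I \<Longrightarrow> C > 0 \<Longrightarrow> (\<And>i. i \<in> I \<Longrightarrow> absv (g i) < C) \<Longrightarrow> absv (sum g I) < C"
proof (induction I rule: finite_induct)
  case empty then show ?case by simp
next
  case (insert x F)
  then have "absv (g x) < C" "absv (sum g F) < C" by auto
  then show ?case using av_ultra[of "g x" "sum g F"] insert(1,2) by simp
qed

lemma av_sum_tri: "absv (sum g I) \<le> (\<Sum>i\<in>I. absv (g i))"
proof (cases "finite I")
  case True then show ?thesis
  proof (induction I rule: finite_induct)
    case (insert x F) then show ?case using av_tri[of "g x" "sum g F"] by simp
  qed simp
qed simp

lemma av_of_nat_le1: "absv (of_nat n) \<le> 1"
  by (induction n) (auto simp: av_ultra3)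

lemma av_of_nat_pos: "n \<noteq> 0 \<Longrightarrow> absv (of_nat n) > 0"
  by (rule av_pos) simp

lemma av_of_nat_exists1: "absv (of_nat n) = 1 \<or> absv (of_nat (Suc n)) = 1"
proof (rule ccontr)
  assume "\<not> ?thesis"
  then have a: "absv (of_nat n) < 1" "absv (of_nat (Suc n)) < 1"
    using av_of_nat_le1[of n] av_of_nat_le1[of "Suc n"] by auto
  have "(1::'a) = of_nat (Suc n) - of_nat n" by simp
  then have "absv (1::'a) \<le> max (absv (of_nat (Suc n) :: 'a)) (absv (of_nat n :: 'a))"
    using av_diff[of "of_nat (Suc n) :: 'a" "of_nat n"] by simp
  with a show False by simp
qed

lemma res_p_gt1: "res_p absv > 1"
proof (cases "\<exists>q::nat. prime q \<and> absv (of_nat q) < 1")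
  case False then show ?thesis unfolding res_p_def
    by (subst if_not_P) auto
next
  case True
  then obtain q where q: "prime q" "absv (of_nat q) < 1" by blast
  have uniq: "q' = q" if "prime q'" "absv (of_nat q') < 1" for q'
  proof (rule ccontr)
    assume ne: "q' \<noteq> q"
    then have "coprime q q'" using q(1) that(1) by (simp add: primes_coprime)
    then have g: "gcd q q' = 1" by simp
    have "q \<noteq> 0" using q(1) by auto
    then obtain x y where xy: "q * x = q' * y + gcd q q'" using bezout_nat by blast
    then have "(of_nat (q * x) :: 'a) = of_nat (q' * y + 1)"
      using g by simp
    then have "(of_nat q * of_nat x :: 'a) - of_nat q' * of_nat y = 1"
      by (simp add: algebra_simps)
    then have "absv (1::'a) \<le> max (absv (of_nat q * of_nat x :: 'a)) (absv (of_nat q' * of_nat y :: 'a))"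
      using av_diff[of "of_nat q * of_nat x :: 'a" "of_nat q' * of_nat y"] by simp
    moreover have "absv (of_nat q * of_nat x :: 'a) < 1"
    proof -
      have "absv (of_nat q :: 'a) * absv (of_nat x :: 'a) \<le> absv (of_nat q :: 'a) * 1"
        by (rule mult_left_mono) (auto simp: av_of_nat_le1)
      then show ?thesis using q(2) by (simp add: av_mult)
    qed
    moreover have "absv (of_nat q' * of_nat y :: 'a) < 1"
    proof -
      have "absv (of_nat q' :: 'a) * absv (of_nat y :: 'a) \<le> absv (of_nat q' :: 'a) * 1"
        by (rule mult_left_mono) (auto simp: av_of_nat_le1)
      then show ?thesis using that(2) by (simp add: av_mult)
    qed
    ultimately show False by simp
  qed
  have T: "(THE q::nat. prime q \<and> absv (of_nat q) < 1) = q"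
    by (rule the_equality) (use q uniq in blast)+
  have "res_p absv = real q" unfolding res_p_def using True T by (subst if_P) auto
  moreover have "q > 1" using q(1) prime_gt_1_nat by blast
  ultimately show ?thesis by simp
qed

end

definition lin :: "'a::comm_ring_1 \<Rightarrow> 'a poly" where "lin b = [:-b, 1:]"

definition linprod :: "'a::comm_ring_1 list \<Rightarrow> 'a poly" where
  "linprod bs = prod_list (map lin bs)"

lemma linprod_Nil[simp]: "linprod [] = 1" by (simp add: linprod_def)
lemma linprod_Cons[simp]: "linprod (b # bs) = lin b * linprod bs" by (simp add: linprod_def)

lemma lin_nz[simp]: "lin b \<noteq> 0" by (simp add: lin_def)

lemma linprod_nz[simp]: "linprod (bs :: 'a::idom list) \<noteq> 0"
  by (induction bs) auto

lemma poly_lin[simp]: "poly (lin b) x = x - b" by (simp add: lin_def)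

lemma coeff_lin_mult: "coeff (lin b * h) n = (if n = 0 then - b * coeff h 0 else - b * coeff h n + coeff h (n - 1))"
  by (cases n) (simp_all add: lin_def)

lemma order_lin: "order w (lin (b::'a::idom)) = (if w = b then 1 else 0)"
proof (cases "w = b")
  case True then show ?thesis using order_power_n_n[of b 1] by (simp add: lin_def)
next
  case False then show ?thesis using order_0I[of "lin b" w] by simp
qed

lemma order_linprod: "order w (linprod (bs :: 'a::idom list)) = count_list bs w"
proof (induction bs)
  case Nil then show ?case by (simp add: order_0I)
next
  case (Cons b bs)
  have "order w (lin b * linprod bs) = order w (lin b) + order w (linprod bs)"
    by (rule order_mult) simp
  then show ?case using Cons by (auto simp: order_lin)
qed

lemma degree_linprod: "degree (linprod (bs :: 'a::idom list)) = length bs"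
proof (induction bs)
  case (Cons b bs)
  have "degree (lin b * linprod bs) = degree (lin b) + degree (linprod bs)"
    by (rule degree_mult_eq) auto
  then show ?case using Cons by (simp add: lin_def)
qed simp

lemma lead_linprod: "coeff (linprod (bs :: 'a::idom list)) (length bs) = 1"
proof (induction bs)
  case (Cons b bs)
  have "coeff (linprod bs) (Suc (length bs)) = 0"
    by (rule coeff_eq_0) (simp add: degree_linprod)
  then show ?case using Cons by (simp add: coeff_lin_mult)
qed simp

lemma pcompose_lin_shift: "pcompose (lin (a + x)) [:x, 1:] = lin (a::'a::comm_ring_1)"
  by (simp add: lin_def pcompose_pCons)

lemma pcompose_power: "pcompose (p ^ n) q = (pcompose p q) ^ n"
  by (induction n) (simp_all add: pcompose_1 pcompose_mult)

lemma dvd_shift: fixes p :: "'a::comm_ring_1 poly" shows "[:-(a + x), 1:] ^ n dvd p \<Longrightarrow> [:-a, 1:] ^ n dvd pcompose p [:x, 1:]"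
proof -
  assume "[:-(a + x), 1:] ^ n dvd p"
  then obtain r where r: "p = [:-(a + x), 1:] ^ n * r" by (auto elim: dvdE)
  have "pcompose p [:x, 1:] = (pcompose [:-(a + x), 1:] [:x,1:]) ^ n * pcompose r [:x, 1:]"
    by (simp only: r pcompose_mult pcompose_power)
  also have "pcompose [:-(a + x), 1:] [:x,1:] = [:-a, 1:]"
    by (simp add: pcompose_pCons)
  finally show ?thesis by simp
qed

lemma pcompose_shift_back: "pcompose (pcompose p [:x, 1:]) [:-x, 1:] = (p :: 'a::comm_ring_1 poly)"
proof -
  have "pcompose [:x, 1:] [:-x, 1:] = [:0, 1:]" by (simp add: pcompose_pCons)
  then show ?thesis by (metis pcompose_assoc pcompose_idR)
qed

lemma order_shift:
  fixes p :: "'a::idom poly"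
  assumes "p \<noteq> 0"
  shows "order a (pcompose p [:x, 1:]) = order (a + x) p"
proof -
  have Q: "pcompose p [:x, 1:] \<noteq> 0"
  proof
    assume "pcompose p [:x, 1:] = 0"
    then have "pcompose (pcompose p [:x, 1:]) [:-x, 1:] = 0" by simp
    then show False using assms by (simp only: pcompose_shift_back)
  qed
  have 1: "[:-a, 1:] ^ n dvd pcompose p [:x, 1:] \<longleftrightarrow> [:-(a + x), 1:] ^ n dvd p" for n
  proof
    assume "[:-a, 1:] ^ n dvd pcompose p [:x, 1:]"
    then have "[:-(a + x), 1:] ^ n dvd pcompose (pcompose p [:x, 1:]) [:-x, 1:]"
      using dvd_shift[of "a + x" "-x" n "pcompose p [:x, 1:]"] by simp
    then show "[:-(a + x), 1:] ^ n dvd p" by (simp add: pcompose_shift_back)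
  qed (rule dvd_shift)
  show ?thesis
  proof (rule antisym)
    show "order a (pcompose p [:x, 1:]) \<le> order (a + x) p"
      using 1[of "order a (pcompose p [:x, 1:])"] order_1[of a "pcompose p [:x, 1:]"]
        order_divides[of "a + x"] assms by blast
    show "order (a + x) p \<le> order a (pcompose p [:x, 1:])"
      using 1[of "order (a + x) p"] order_1[of "a + x" p] order_divides[of a] Q by blast
  qed
qed

context nav begin

lemma no_root_const: fixes p :: "'a poly" shows "(\<forall>z. poly p z \<noteq> 0) \<Longrightarrow> degree p = 0"
  using av_root[of p] by (cases "degree p") auto

lemma split_disk:
  fixes Q :: "'a poly"
  assumes "Q \<noteq> 0" "t > 0"
  shows "\<exists>bs h. Q = linprod bs * h \<and> (\<forall>b\<in>set bs. absv b \<le> t) \<and> coeff h 0 \<noteq> 0 \<and>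
            (\<forall>j\<ge>1. absv (coeff h j) * t ^ j < absv (coeff h 0))"
  using assms(1)
proof (induction "degree Q" arbitrary: Q rule: less_induct)
  case less
  show ?case
  proof (cases "\<exists>z. poly Q z = 0")
    case False
    then have d: "degree Q = 0" using no_root_const by blast
    have "coeff Q j = 0" if "j \<ge> 1" for j using d that by (intro coeff_eq_0) simp
    moreover have "coeff Q 0 \<noteq> 0" using d less.prems by (metis leading_coeff_0_iff)
    ultimately show ?thesis
      by (intro exI[of _ "[]"] exI[of _ Q]) (simp add: av_pos)
  next
    case True
    then obtain \<beta> where "poly Q \<beta> = 0" by blast
    then obtain Q' where Q': "Q = lin \<beta> * Q'" unfolding lin_def
      by (metis dvdE poly_eq_0_iff_dvd)
    have nz: "Q' \<noteq> 0" using less.prems Q' by auto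
    have "degree (lin \<beta> * Q') = degree (lin \<beta>) + degree Q'" by (rule degree_mult_eq) (use nz in auto)
    then have "degree Q = 1 + degree Q'" using Q' by (simp add: lin_def)
    then have "degree Q' < degree Q" by simp
    from less.hyps[OF this nz] obtain bs h where
      IH: "Q' = linprod bs * h" "\<forall>b\<in>set bs. absv b \<le> t" "coeff h 0 \<noteq> 0"
          "\<forall>j\<ge>1. absv (coeff h j) * t ^ j < absv (coeff h 0)" by blast
    show ?thesis
    proof (cases "absv \<beta> \<le> t")
      case True
      show ?thesis
        by (intro exI[of _ "\<beta> # bs"] exI[of _ h]) (use IH Q' True in \<open>simp add: mult.assoc\<close>)
    next
      case False
      define h' where "h' = lin \<beta> * h"
      have b0: "\<beta> \<noteq> 0" using False assms(2) by auto
      have h0: "coeff h' 0 = - \<beta> * coeff h 0" by (simp add: h'_def coeff_lin_mult)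
      have h0nz: "coeff h' 0 \<noteq> 0" using h0 b0 IH(3) by simp
      have c0: "absv (coeff h 0) > 0" using IH(3) av_pos by blast
      have bnd: "absv (coeff h' j) * t ^ j < absv (coeff h' 0)" if j: "j \<ge> 1" for j
      proof -
        have e: "coeff h' j = - \<beta> * coeff h j + coeff h (j - 1)"
          using j by (simp add: h'_def coeff_lin_mult)
        have A: "absv (- \<beta> * coeff h j) * t ^ j < absv (coeff h' 0)"
        proof -
          have "absv (- \<beta> * coeff h j) * t ^ j = absv \<beta> * (absv (coeff h j) * t ^ j)"
            by (simp add: av_mult)
          also have "\<dots> < absv \<beta> * absv (coeff h 0)"
            using IH(4) j av_pos[OF b0] by (intro mult_strict_left_mono) auto
          also have "\<dots> = absv (coeff h' 0)" by (simp add: h0 av_mult)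
          finally show ?thesis .
        qed
        have B: "absv (coeff h (j - 1)) * t ^ j < absv (coeff h' 0)"
        proof -
          have "absv (coeff h (j - 1)) * t ^ (j - 1) \<le> absv (coeff h 0)"
          proof (cases "j - 1 = 0")
            case True then show ?thesis by simp
          next
            case False
            then have "1 \<le> j - 1" by simp
            then have "absv (coeff h (j - 1)) * t ^ (j - 1) < absv (coeff h 0)" using IH(4) by blast
            then show ?thesis by simp
          qed
          then have "absv (coeff h (j - 1)) * t ^ (j - 1) * t \<le> absv (coeff h 0) * t"
            using assms(2) by (intro mult_right_mono) auto
          moreover have "t ^ j = t ^ (j - 1) * t" using j
            by (metis One_nat_def Suc_pred less_eq_Suc_le power_Suc2)
          moreover have "absv (coeff h 0) * t < absv (coeff h 0) * absv \<beta>"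
            using c0 False by (intro mult_strict_left_mono) auto
          ultimately have "absv (coeff h (j - 1)) * t ^ j < absv (coeff h 0) * absv \<beta>"
            by (simp add: mult.assoc)
          then show ?thesis by (simp add: h0 av_mult mult.commute)
        qed
        have "absv (coeff h' j) \<le> max (absv (- \<beta> * coeff h j)) (absv (coeff h (j - 1)))"
          unfolding e by (rule av_ultra)
        then have "absv (coeff h' j) * t ^ j \<le> max (absv (- \<beta> * coeff h j)) (absv (coeff h (j - 1))) * t ^ j"
          using assms(2) by (intro mult_right_mono) auto
        also have "\<dots> = max (absv (- \<beta> * coeff h j) * t ^ j) (absv (coeff h (j - 1)) * t ^ j)"
          using assms(2) by (simp add: max_mult_distrib_right)
        finally show ?thesis using A B by simp
      qed
      show ?thesis
        by (intro exI[of _ bs] exI[of _ h'])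
           (use IH Q' h0nz bnd in \<open>simp add: h'_def mult.assoc mult.left_commute\<close>)
    qed
  qed
qed

lemma split_full:
  fixes Q :: "'a poly"
  assumes "Q \<noteq> 0"
  shows "\<exists>bs. Q = smult (lead_coeff Q) (linprod bs)"
  using assms
proof (induction "degree Q" arbitrary: Q rule: less_induct)
  case less
  show ?case
  proof (cases "\<exists>z. poly Q z = 0")
    case False
    then have d: "degree Q = 0" using no_root_const by blast
    then show ?thesis by (intro exI[of _ "[]"]) (metis degree_0_id linprod_Nil smult_one)
  next
    case True
    then obtain \<beta> where "poly Q \<beta> = 0" by blast
    then obtain Q' where Q': "Q = lin \<beta> * Q'" unfolding lin_def
      by (metis dvdE poly_eq_0_iff_dvd)
    have nz: "Q' \<noteq> 0" using less.prems Q' by auto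
    have "degree (lin \<beta> * Q') = degree (lin \<beta>) + degree Q'" by (rule degree_mult_eq) (use nz in auto)
    then have "degree Q = 1 + degree Q'" using Q' by (simp add: lin_def)
    then have "degree Q' < degree Q" by simp
    from less.hyps[OF this nz] obtain bs where bs: "Q' = smult (lead_coeff Q') (linprod bs)" by blast
    have "lead_coeff (lin \<beta> * Q') = lead_coeff (lin \<beta>) * lead_coeff Q'" by (rule lead_coeff_mult)
    then have "lead_coeff Q = lead_coeff Q'" using Q' by (simp add: lin_def)
    then show ?thesis using Q' bs
      by (intro exI[of _ "\<beta> # bs"]) (metis linprod_Cons mult_smult_right)
  qed
qed

end

context nav begin

lemma linprod_bound:
  assumes "\<forall>b\<in>set bs. absv b \<le> t" "t \<ge> 0"
  shows "absv (coeff (linprod bs) i) * t ^ i \<le> t ^ (length bs)"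
  using assms(1)
proof (induction bs arbitrary: i)
  case Nil then show ?case
    by (cases i) (auto simp: linprod_def)
next
  case (Cons b bs)
  let ?H = "linprod bs"
  have IH: "absv (coeff ?H k) * t ^ k \<le> t ^ length bs" for k using Cons by auto
  have bt: "absv b \<le> t" using Cons by auto
  show ?case
  proof (cases i)
    case 0
    have "absv (coeff (linprod (b # bs)) i) = absv b * absv (coeff ?H 0)"
      using 0 by (simp add: coeff_lin_mult av_mult)
    also have "\<dots> \<le> t * t ^ length bs"
      using IH[of 0] bt assms(2) by (intro mult_mono) auto
    finally show ?thesis using 0 by simp
  next
    case (Suc k)
    have e: "coeff (linprod (b # bs)) i = - b * coeff ?H (Suc k) + coeff ?H k"
      using Suc by (simp add: coeff_lin_mult)
    have A: "absv (- b * coeff ?H (Suc k)) * t ^ i \<le> t ^ Suc (length bs)"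
    proof -
      have "absv (- b * coeff ?H (Suc k)) * t ^ i = absv b * (absv (coeff ?H (Suc k)) * t ^ Suc k)"
        using Suc by (simp add: av_mult)
      also have "\<dots> \<le> t * t ^ length bs"
        using IH[of "Suc k"] bt assms(2) by (intro mult_mono) auto
      finally show ?thesis by simp
    qed
    have B: "absv (coeff ?H k) * t ^ i \<le> t ^ Suc (length bs)"
    proof -
      have "absv (coeff ?H k) * t ^ i = (absv (coeff ?H k) * t ^ k) * t"
        using Suc by (simp add: mult_ac)
      also have "\<dots> \<le> t ^ length bs * t"
        using IH[of k] assms(2) by (intro mult_right_mono) auto
      finally show ?thesis by (simp add: mult.commute)
    qed
    have "absv (coeff (linprod (b # bs)) i) * t ^ i \<le>
          max (absv (- b * coeff ?H (Suc k))) (absv (coeff ?H k)) * t ^ i"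
      unfolding e using assms(2) by (intro mult_right_mono av_ultra) auto
    also have "\<dots> = max (absv (- b * coeff ?H (Suc k)) * t ^ i) (absv (coeff ?H k) * t ^ i)"
      using assms(2) by (simp add: max_mult_distrib_right)
    finally show ?thesis using A B by simp
  qed
qed

lemma poly_h:
  assumes h: "\<forall>j\<ge>1. absv (coeff h j) * t ^ j < absv (coeff h 0)"
    and w: "absv w \<le> t" and t: "t \<ge> 0"
  shows "absv (poly h w) = absv (coeff h 0)"
proof (cases "degree h")
  case 0
  then obtain c where "h = [:c:]" by (metis degree_0_id)
  then show ?thesis by simp
next
  case (Suc n)
  have c0: "absv (coeff h 0) > 0"
  proof -
    have "absv (coeff h 1) * t ^ 1 < absv (coeff h 0)" using h by auto
    moreover have "0 \<le> absv (coeff h 1) * t ^ 1" using t by simp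
    ultimately show ?thesis by linarith
  qed
  have "poly h w = (\<Sum>i\<le>Suc n. coeff h i * w ^ i)" using Suc by (simp add: poly_altdef)
  also have "\<dots> = coeff h 0 + (\<Sum>i\<le>n. coeff h (Suc i) * w ^ Suc i)"
    by (subst sum.atMost_Suc_shift) simp
  finally have e: "poly h w = coeff h 0 + (\<Sum>i\<le>n. coeff h (Suc i) * w ^ Suc i)" .
  have "absv (\<Sum>i\<le>n. coeff h (Suc i) * w ^ Suc i) < absv (coeff h 0)"
  proof (rule av_sum_less)
    fix i assume "i \<in> {..n}"
    have "absv (coeff h (Suc i) * w ^ Suc i) = absv (coeff h (Suc i)) * absv w ^ Suc i"
      by (simp add: av_mult av_power)
    also have "\<dots> \<le> absv (coeff h (Suc i)) * t ^ Suc i"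
      using w by (intro mult_left_mono power_mono) auto
    also have "\<dots> < absv (coeff h 0)" using h by auto
    finally show "absv (coeff h (Suc i) * w ^ Suc i) < absv (coeff h 0)" .
  qed (use c0 in auto)
  then show ?thesis unfolding e by (rule av_strict)
qed

lemma coeff_m:
  assumes Q: "Q = linprod bs * h" and near: "\<forall>b\<in>set bs. absv b \<le> t"
    and h: "\<forall>j\<ge>1. absv (coeff h j) * t ^ j < absv (coeff h 0)" and t: "t > 0"
  shows "absv (coeff Q (length bs)) = absv (coeff h 0)"
proof -
  let ?m = "length bs"
  let ?H = "linprod bs"
  have "coeff Q ?m = (\<Sum>i\<le>?m. coeff ?H i * coeff h (?m - i))"
    unfolding Q by (rule coeff_mult)
  also have "\<dots> = coeff ?H ?m * coeff h 0 + (\<Sum>i<?m. coeff ?H i * coeff h (?m - i))"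
    by (simp add: lessThan_Suc_atMost[symmetric])
  also have "\<dots> = coeff h 0 + (\<Sum>i<?m. coeff ?H i * coeff h (?m - i))"
    by (simp add: lead_linprod)
  finally have e: "coeff Q ?m = coeff h 0 + (\<Sum>i<?m. coeff ?H i * coeff h (?m - i))" .
  have c0: "absv (coeff h 0) > 0"
  proof -
    have "absv (coeff h 1) * t ^ 1 < absv (coeff h 0)" using h by auto
    moreover have "0 \<le> absv (coeff h 1) * t ^ 1" using t by simp
    ultimately show ?thesis by linarith
  qed
  have "absv (\<Sum>i<?m. coeff ?H i * coeff h (?m - i)) < absv (coeff h 0)"
  proof (rule av_sum_less)
    fix i assume i: "i \<in> {..<?m}"
    have tp: "t ^ ?m > 0" using t by simp
    have "absv (coeff ?H i * coeff h (?m - i)) * t ^ ?m =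
          (absv (coeff ?H i) * t ^ i) * (absv (coeff h (?m - i)) * t ^ (?m - i))"
      using i by (simp add: av_mult mult_ac power_add[symmetric])
    also have "\<dots> \<le> t ^ ?m * (absv (coeff h (?m - i)) * t ^ (?m - i))"
      using linprod_bound[OF near, of i] t by (intro mult_right_mono) auto
    also have "\<dots> < t ^ ?m * absv (coeff h 0)"
      using h i tp by (intro mult_strict_left_mono) auto
    finally show "absv (coeff ?H i * coeff h (?m - i)) < absv (coeff h 0)"
      using tp by (simp add: mult.commute)
  qed (use c0 in auto)
  then show ?thesis unfolding e by (rule av_strict)
qed

end

lemma linprod_remove1: "u \<in> set bs \<Longrightarrow> linprod bs = lin u * linprod (remove1 u bs)"
proof (induction bs)
  case (Cons b bs)
  show ?case
  proof (cases "b = u")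
    case True then show ?thesis by simp
  next
    case False
    then have "u \<in> set bs" using Cons.prems by simp
    then show ?thesis using Cons.IH False by (simp add: mult.left_commute)
  qed
qed simp

lemma prod_list_le1: "(\<forall>x\<in>set xs. 0 \<le> x \<and> x \<le> (1::real)) \<Longrightarrow> prod_list xs \<le> 1 \<and> 0 \<le> prod_list xs"
proof (induction xs)
  case (Cons x xs)
  then have "prod_list xs \<le> 1" "0 \<le> prod_list xs" "0 \<le> x" "x \<le> 1" by auto
  then show ?case by (simp add: mult_le_one)
qed simp

lemma prod_list_eq1: "(\<forall>x\<in>set xs. 0 \<le> x \<and> x \<le> (1::real)) \<Longrightarrow> prod_list xs = 1 \<Longrightarrow> \<forall>x\<in>set xs. x = 1"
proof (induction xs)
  case (Cons x xs)
  have p: "prod_list xs \<le> 1" "0 \<le> prod_list xs" using prod_list_le1[of xs] Cons.prems by auto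
  have x: "0 \<le> x" "x \<le> 1" using Cons.prems by auto
  have e: "x * prod_list xs = 1" using Cons.prems by simp
  have "x * prod_list xs \<le> x * 1" using p x by (intro mult_left_mono) auto
  then have x1: "x = 1" using e x by simp
  then have pl: "prod_list xs = 1" using e by simp
  have "\<forall>y\<in>set xs. 0 \<le> y \<and> y \<le> 1" using Cons.prems(1) by simp
  then have "\<forall>y\<in>set xs. y = 1" using Cons.IH pl by blast
  then show ?case using x1 by simp
qed simp

lemma distinct_from_remove1: "(\<forall>u\<in>set bs. u \<notin> set (remove1 u bs)) \<Longrightarrow> distinct bs"
proof (induction bs)
  case (Cons b bs)
  have "b \<notin> set bs" using Cons.prems by simp
  moreover have "\<forall>u\<in>set bs. u \<notin> set (remove1 u bs)"
  proof
    fix u assume u: "u \<in> set bs"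
    with \<open>b \<notin> set bs\<close> have "u \<noteq> b" by auto
    then show "u \<notin> set (remove1 u bs)" using Cons.prems u by auto
  qed
  ultimately show ?case using Cons.IH by simp
qed simp

context nav begin

lemma av_poly_linprod: "absv (poly (linprod bs) u) = prod_list (map (\<lambda>b. absv (u - b)) bs)"
  by (induction bs) (simp_all add: av_mult)

lemma unit_points:
  "\<exists>U::'a set. finite U \<and> D < card U \<and> (\<forall>u\<in>U. absv u \<le> 1) \<and>
      (\<forall>u\<in>U. \<forall>v\<in>U. u \<noteq> v \<longrightarrow> absv (u - v) = 1)"
proof -
  obtain N where N: "absv (of_nat N :: 'a) = 1" "D < N"
  proof (cases "absv (of_nat (Suc D) :: 'a) = 1")
    case True then show ?thesis using that[of "Suc D"] by simp
  next
    case False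
    then have "absv (of_nat (Suc (Suc D)) :: 'a) = 1" using av_of_nat_exists1[of "Suc D"] by simp
    then show ?thesis using that[of "Suc (Suc D)"] by simp
  qed
  define R :: "'a poly" where "R = monom 1 N - 1"
  have cN: "coeff R N = 1" using N by (simp add: R_def coeff_monom)
  have dR: "degree R = N"
  proof (rule antisym)
    show "degree R \<le> N" unfolding R_def
      by (rule order.trans[OF degree_diff_le_max]) (simp add: degree_monom_le)
    show "N \<le> degree R" using cN by (intro le_degree) simp
  qed
  have Rnz: "R \<noteq> 0" using cN by auto
  have lR: "lead_coeff R = 1" using cN dR by simp
  from split_full[OF Rnz] obtain bs where bs: "R = smult (lead_coeff R) (linprod bs)" ..
  then have Rbs: "R = linprod bs" using lR by simp
  have len: "length bs = N" using dR Rbs degree_linprod[of bs] by simp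
  have roots: "u ^ N = 1" if "u \<in> set bs" for u
  proof -
    have "poly R u = 0" using that Rbs linprod_remove1[OF that] by simp
    then show ?thesis by (simp add: R_def poly_monom)
  qed
  have abs1: "absv u = 1" if "u \<in> set bs" for u
  proof -
    have "absv u ^ N = 1" using roots[OF that] by (metis av_1 av_power)
    then show ?thesis using power_eq_iff_eq_base[of N "absv u" 1] N(2) by simp
  qed
  have key: "\<forall>b\<in>set (remove1 u bs). absv (u - b) = 1" if u: "u \<in> set bs" for u
  proof -
    let ?L = "linprod (remove1 u bs)"
    have "pderiv R = pderiv (lin u * ?L)" using Rbs linprod_remove1[OF u] by simp
    moreover have "pderiv (lin u * ?L) = lin u * pderiv ?L + ?L * pderiv (lin u)" by (rule pderiv_mult)
    moreover have "pderiv (lin u) = 1" by (simp add: lin_def pderiv_pCons)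
    ultimately have "poly (pderiv R) u = poly ?L u" by simp
    moreover have "pderiv R = monom (of_nat N) (N - 1)"
      by (simp add: R_def pderiv_diff pderiv_monom)
    ultimately have "poly ?L u = of_nat N * u ^ (N - 1)" by (simp add: poly_monom)
    then have "absv (poly ?L u) = 1" using N(1) abs1[OF u] by (simp add: av_mult av_power)
    then have P1: "prod_list (map (\<lambda>b. absv (u - b)) (remove1 u bs)) = 1"
      by (simp add: av_poly_linprod)
    have "\<forall>x\<in>set (map (\<lambda>b. absv (u - b)) (remove1 u bs)). 0 \<le> x \<and> x \<le> 1"
    proof
      fix x assume "x \<in> set (map (\<lambda>b. absv (u - b)) (remove1 u bs))"
      then obtain b where b: "b \<in> set (remove1 u bs)" "x = absv (u - b)" by auto
      have "b \<in> set bs" using b(1) by (meson notin_set_remove1)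
      then show "0 \<le> x \<and> x \<le> 1" using b(2) av_diff[of u b] abs1[OF u] abs1[of b] by auto
    qed
    from prod_list_eq1[OF this P1] show ?thesis by simp
  qed
  have dist: "distinct bs"
  proof (rule distinct_from_remove1)
    show "\<forall>u\<in>set bs. u \<notin> set (remove1 u bs)" using key by force
  qed
  show ?thesis
  proof (intro exI[of _ "set bs"] conjI ballI impI)
    show "D < card (set bs)" using dist len N(2) by (simp add: distinct_card)
    show "absv u \<le> 1" if "u \<in> set bs" for u using abs1[OF that] by simp
    show "absv (u - v) = 1" if "u \<in> set bs" "v \<in> set bs" "u \<noteq> v" for u v
      using key[OF that(1)] that by (simp add: in_set_remove1)
  qed simp
qed

end

lemma coeff_pcompose_scale: "coeff (pcompose p [:0, b:]) i = coeff p i * (b::'a::comm_ring_1) ^ i"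
proof (induction p arbitrary: i)
  case 0 then show ?case by simp
next
  case (pCons a p)
  show ?case
  proof (cases i)
    case 0 then show ?thesis by (simp add: pcompose_pCons)
  next
    case (Suc k)
    then show ?thesis using pCons.IH[of k] by (simp add: pcompose_pCons mult_ac)
  qed
qed

context nav begin

lemma av_prod: "absv (prod g S) = (\<Prod>x\<in>S. absv (g x))"
proof (cases "finite S")
  case True then show ?thesis
    by (induction S rule: finite_induct) (simp_all add: av_mult)
qed simp

lemma coeff_prod_lin_bound:
  assumes "finite V" "\<forall>v\<in>V. absv v \<le> 1"
  shows "absv (coeff (\<Prod>v\<in>V. lin v) i) \<le> 1"
  using assms
proof (induction V arbitrary: i rule: finite_induct)
  case empty then show ?case by (cases i) auto
next
  case (insert v F)
  let ?H = "\<Prod>v\<in>F. lin v"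
  have IH: "absv (coeff ?H k) \<le> 1" for k using insert by auto
  have v1: "absv v \<le> 1" using insert by auto
  have e: "(\<Prod>v\<in>insert v F. lin v) = lin v * ?H" using insert by simp
  show ?case
  proof (cases i)
    case 0
    have "absv (coeff (lin v * ?H) 0) = absv v * absv (coeff ?H 0)"
      by (simp add: coeff_lin_mult av_mult)
    also have "\<dots> \<le> 1 * 1" using v1 IH[of 0] by (intro mult_mono) auto
    finally show ?thesis using 0 e by simp
  next
    case (Suc k)
    have "absv (coeff (lin v * ?H) i) = absv (- v * coeff ?H (Suc k) + coeff ?H k)"
      using Suc by (simp add: coeff_lin_mult)
    also have "\<dots> \<le> 1"
    proof (rule av_ultra3)
      have "absv (- v * coeff ?H (Suc k)) = absv v * absv (coeff ?H (Suc k))" by (simp add: av_mult)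
      also have "\<dots> \<le> 1 * 1" using v1 IH[of "Suc k"] by (intro mult_mono) auto
      finally show "absv (- v * coeff ?H (Suc k)) \<le> 1" by simp
      show "absv (coeff ?H k) \<le> 1" by (rule IH)
    qed
    finally show ?thesis using e by simp
  qed
qed

lemma lagrange_bound:
  fixes P :: "'a poly"
  assumes U: "finite U" "card U = Suc D" "degree P \<le> D"
    and U1: "\<forall>u\<in>U. absv u \<le> 1" and Ud: "\<forall>u\<in>U. \<forall>v\<in>U. u \<noteq> v \<longrightarrow> absv (u - v) = 1"
  shows "absv (coeff P i) \<le> Max ((\<lambda>u. absv (poly P u)) ` U)"
proof -
  have Une: "U \<noteq> {}" using U by auto
  define den where "den u = (\<Prod>v\<in>U-{u}. (u - v))" for u
  define L where "L u = smult (inverse (den u)) (\<Prod>v\<in>U-{u}. lin v)" for u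
  define I where "I = (\<Sum>u\<in>U. smult (poly P u) (L u))"
  have den_abs: "absv (den u) = 1" if "u \<in> U" for u
  proof -
    have "absv (den u) = (\<Prod>v\<in>U-{u}. absv (u - v))"
      unfolding den_def by (rule av_prod)
    also have "\<dots> = 1" using Ud that by (intro prod.neutral) auto
    finally show ?thesis .
  qed
  have den_nz: "den u \<noteq> 0" if "u \<in> U" for u using den_abs[OF that] by auto
  have polyL: "poly (L u) w = (if w = u then 1 else 0)" if "u \<in> U" "w \<in> U" for u w
  proof (cases "w = u")
    case True
    then show ?thesis using den_nz[OF that(1)] by (simp add: L_def poly_prod den_def)
  next
    case False
    then have "w \<in> U - {u}" using that by auto
    then have "(\<Prod>v\<in>U-{u}. poly (lin v) w) = 0" using U(1)
      by (intro prod_zero) auto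
    then show ?thesis using False by (simp add: L_def poly_prod)
  qed
  have polyI: "poly I w = poly P w" if "w \<in> U" for w
  proof -
    have "poly I w = (\<Sum>u\<in>U. poly P u * poly (L u) w)" by (simp add: I_def poly_sum)
    also have "\<dots> = (\<Sum>u\<in>U. if u = w then poly P u else 0)"
      using that by (intro sum.cong) (auto simp: polyL)
    also have "\<dots> = poly P w" using that U(1) by (simp add: sum.delta')
    finally show ?thesis .
  qed
  have degL: "degree (L u) \<le> D" if "u \<in> U" for u
  proof -
    have "degree (L u) \<le> degree (\<Prod>v\<in>U-{u}. lin v)" unfolding L_def by (rule degree_smult_le)
    also have "\<dots> \<le> sum (degree \<circ> lin) (U - {u})" using U(1) by (intro degree_prod_sum_le) auto
    also have "\<dots> = card (U - {u})" by (simp add: lin_def)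
    also have "\<dots> = D" using U that by simp
    finally show ?thesis .
  qed
  have degI: "degree I \<le> D" unfolding I_def using U(1)
    by (intro degree_sum_le) (auto intro: order.trans[OF degree_smult_le] degL)
  have IP: "I = P"
  proof (rule ccontr)
    assume "I \<noteq> P"
    then have nz: "I - P \<noteq> 0" by simp
    have "U \<subseteq> {x. poly (I - P) x = 0}" using polyI by auto
    then have "card U \<le> card {x. poly (I - P) x = 0}"
      using poly_roots_finite[OF nz] by (intro card_mono) auto
    also have "\<dots> \<le> degree (I - P)" by (rule card_poly_roots_bound[OF nz])
    also have "\<dots> \<le> D" using degI U(3) by (meson degree_diff_le)
    finally show False using U(2) by simp
  qed
  let ?M = "Max ((\<lambda>u. absv (poly P u)) ` U)"
  have M0: "?M \<ge> 0" using Une U(1)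
    by (metis (no_types, lifting) Max_ge av_nonneg empty_is_image ex_in_conv finite_imageI imageI order.trans)
  have "coeff P i = coeff I i" using IP by simp
  also have "\<dots> = (\<Sum>u\<in>U. poly P u * coeff (L u) i)" unfolding I_def coeff_sum by simp
  also have "absv \<dots> \<le> ?M"
  proof (rule av_sum_le[OF U(1) M0])
    fix u assume u: "u \<in> U"
    have "absv (coeff (L u) i) = absv (inverse (den u)) * absv (coeff (\<Prod>v\<in>U-{u}. lin v) i)"
      by (simp add: L_def av_mult)
    also have "\<dots> \<le> 1"
    proof -
      have "absv (inverse (den u)) = 1" using den_abs[OF u] av_divide[of 1 "den u"]
        by (simp add: inverse_eq_divide)
      moreover have "absv (coeff (\<Prod>v\<in>U-{u}. lin v) i) \<le> 1"
        using U(1) U1 by (intro coeff_prod_lin_bound) auto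
      ultimately show ?thesis by simp
    qed
    finally have cL: "absv (coeff (L u) i) \<le> 1" .
    have "absv (poly P u * coeff (L u) i) = absv (poly P u) * absv (coeff (L u) i)" by (simp add: av_mult)
    also have "\<dots> \<le> absv (poly P u) * 1" using cL by (intro mult_left_mono) auto
    also have "\<dots> \<le> ?M" using u U(1) by (simp add: Max_ge)
    finally show "absv (poly P u * coeff (L u) i) \<le> ?M" .
  qed
  finally show ?thesis .
qed

lemma max_modulus:
  fixes P :: "'a poly"
  assumes b: "\<beta> \<noteq> 0"
  shows "\<exists>w. absv w \<le> absv \<beta> \<and> (\<forall>i. absv (coeff P i) * absv \<beta> ^ i \<le> absv (poly P w))"
proof -
  let ?D = "degree P"
  obtain U where U: "finite U" "?D < card U" "\<forall>u\<in>U. absv u \<le> 1"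
      "\<forall>u\<in>U. \<forall>v\<in>U. u \<noteq> v \<longrightarrow> absv (u - v) = 1"
    using unit_points[of ?D] by blast
  obtain T where T: "T \<subseteq> U" "card T = Suc ?D" "finite T"
    using obtain_subset_with_card_n[of "Suc ?D" U] U(2) by auto
  have Tne: "T \<noteq> {}" using T by auto
  define Pt where "Pt = pcompose P [:0, \<beta>:]"
  have degPt: "degree Pt \<le> ?D" unfolding Pt_def
    using degree_pcompose_le[of P "[:0, \<beta>:]"] b by simp
  let ?M = "Max ((\<lambda>u. absv (poly Pt u)) ` T)"
  have "?M \<in> (\<lambda>u. absv (poly Pt u)) ` T" using T(3) Tne by (intro Max_in) auto
  then obtain u0 where u0: "u0 \<in> T" "absv (poly Pt u0) = ?M" by auto
  have bnd: "absv (coeff Pt i) \<le> ?M" for i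
    by (rule lagrange_bound[OF T(3) T(2) degPt]) (use T U in auto)
  show ?thesis
  proof (intro exI[of _ "\<beta> * u0"] conjI allI)
    show "absv (\<beta> * u0) \<le> absv \<beta>"
    proof -
      have "absv u0 \<le> 1" using U(3) u0 T(1) by auto
      then have "absv \<beta> * absv u0 \<le> absv \<beta> * 1" by (intro mult_left_mono) auto
      then show ?thesis by (simp add: av_mult)
    qed
    fix i
    have "absv (coeff P i) * absv \<beta> ^ i = absv (coeff Pt i)"
      by (simp add: Pt_def coeff_pcompose_scale av_mult av_power)
    also have "\<dots> \<le> absv (poly Pt u0)" using bnd u0 by simp
    also have "poly Pt u0 = poly P (\<beta> * u0)" by (simp add: Pt_def poly_pcompose mult.commute)
    finally show "absv (coeff P i) * absv \<beta> ^ i \<le> absv (poly P (\<beta> * u0))" .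
  qed
qed

end

context nav begin

lemma linprod_poly_bound:
  assumes "\<forall>b\<in>set bs. absv b \<le> t" "absv u \<le> t"
  shows "absv (poly (linprod bs) u) \<le> t ^ length bs"
  using assms(1)
proof (induction bs)
  case Nil then show ?case by simp
next
  case (Cons b bs)
  have "absv (u - b) \<le> t" using av_diff[of u b] Cons.prems assms(2) by auto
  moreover have "absv (poly (linprod bs) u) \<le> t ^ length bs" using Cons by auto
  moreover have "0 \<le> t" using assms(2) av_nonneg[of u] by linarith
  ultimately have "absv (u - b) * absv (poly (linprod bs) u) \<le> t * t ^ length bs"
    by (intro mult_mono) auto
  then show ?case by (simp add: av_mult)
qed

lemma shift_nz:
  fixes f :: "'a poly"
  assumes "degree f \<ge> 1"
  shows "pcompose f [:x, 1:] - [:c:] \<noteq> 0"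
proof
  assume "pcompose f [:x, 1:] - [:c:] = 0"
  then have "pcompose (pcompose f [:x, 1:]) [:-x, 1:] = pcompose [:c:] [:-x, 1:]" by simp
  then have "f = [:c:]" by (simp add: pcompose_shift_back)
  then show False using assms by simp
qed

lemma local_deg_est:
  fixes f :: "'a poly"
  assumes deg: "degree f \<ge> 1" and t: "absv (y - x) = t" "t > 0"
    and hS: "\<forall>z. absv (z - x) \<le> t \<longrightarrow> absv (poly (pderiv f) z) \<le> S"
  shows "absv (of_nat (loc_deg_disk absv f x t) :: 'a) * absv (poly f y - poly f x) \<le> t * S"
    and "1 \<le> loc_deg_disk absv f x t" and "loc_deg_disk absv f x t \<le> degree f"
proof -
  define F where "F = f - [:poly f x:]"
  define Q where "Q = pcompose F [:x, 1:]"
  have Qe: "Q = pcompose f [:x, 1:] - [:poly f x:]" by (simp add: Q_def F_def pcompose_diff)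
  have Qnz: "Q \<noteq> 0" unfolding Qe by (rule shift_nz[OF deg])
  have Fnz: "F \<noteq> 0" using Qnz by (auto simp: Q_def)
  have polyQ: "poly Q w = poly f (x + w) - poly f x" for w by (simp add: Qe poly_pcompose)
  obtain bs h where bh: "Q = linprod bs * h" "\<forall>b\<in>set bs. absv b \<le> t" "coeff h 0 \<noteq> 0"
      "\<forall>j\<ge>1. absv (coeff h j) * t ^ j < absv (coeff h 0)"
    using split_disk[OF Qnz t(2)] by blast
  let ?m = "length bs"
  have hnz: "poly h w \<noteq> 0" if "absv w \<le> t" for w
    using poly_h[OF bh(4) that] t(2) bh(3) by auto
  define W where "W = {w. absv w \<le> t \<and> poly Q w = 0}"
  have Wfin: "finite W" unfolding W_def using poly_roots_finite[OF Qnz] by (auto elim: finite_subset[rotated])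
  define Z where "Z = {z. absv (z - x) \<le> t \<and> poly F z = 0}"
  have ZW: "Z = (\<lambda>w. w + x) ` W"
  proof (rule set_eqI)
    fix z
    have "poly F z = poly Q (z - x)" by (simp add: Q_def poly_pcompose)
    then show "z \<in> Z \<longleftrightarrow> z \<in> (\<lambda>w. w + x) ` W"
      unfolding Z_def W_def by (auto simp: image_iff intro!: exI[of _ "z - x"] simp: Q_def poly_pcompose add.commute)
  qed
  have ldeg: "loc_deg_disk absv f x t = ?m"
  proof -
    have "loc_deg_disk absv f x t = (\<Sum>z\<in>Z. order z F)" by (simp add: loc_deg_disk_def Z_def F_def)
    also have "\<dots> = (\<Sum>w\<in>W. order (w + x) F)" unfolding ZW
      by (subst sum.reindex) (auto simp: inj_on_def)
    also have "\<dots> = (\<Sum>w\<in>W. order w Q)"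
      by (intro sum.cong) (simp_all add: Q_def order_shift[OF Fnz])
    also have "\<dots> = (\<Sum>w\<in>W. count_list bs w)"
    proof (intro sum.cong refl)
      fix w assume "w \<in> W"
      then have "poly h w \<noteq> 0" using hnz by (auto simp: W_def)
      then have "order w h = 0" by (rule order_0I)
      moreover have "order w Q = order w (linprod bs) + order w h"
        unfolding bh(1) by (rule order_mult) (use Qnz bh(1) in simp)
      ultimately show "order w Q = count_list bs w" by (simp add: order_linprod)
    qed
    also have "\<dots> = ?m"
    proof (rule sum_count_set[OF _ Wfin])
      show "set bs \<subseteq> W"
      proof
        fix b assume b: "b \<in> set bs"
        have "poly (linprod bs) b = 0" using linprod_remove1[OF b] by simp
        then show "b \<in> W" using b bh(1,2) by (simp add: W_def)
      qed
    qed
    finally show ?thesis .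
  qed
  have m1: "?m \<ge> 1"
  proof -
    have "poly Q 0 = 0" by (simp add: polyQ)
    then have "poly (linprod bs) 0 = 0" using hnz[of 0] t(2) bh(1) by simp
    then have "bs \<noteq> []" by auto
    then show ?thesis by (cases bs) auto
  qed
  show "1 \<le> loc_deg_disk absv f x t" using m1 ldeg by simp
  have "degree Q = ?m + degree h"
    using bh(1) Qnz by (simp add: degree_mult_eq degree_linprod)
  moreover have "degree Q = degree f"
  proof -
    have d1: "degree (pcompose f [:x, 1:]) = degree f" by (simp add: degree_pcompose)
    have "degree (pcompose f [:x, 1:] + [:- poly f x:]) = degree (pcompose f [:x, 1:])"
      by (rule degree_add_eq_left) (use d1 deg in simp)
    moreover have "pcompose f [:x, 1:] + [:- poly f x:] = Q" by (simp add: Qe)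
    ultimately show ?thesis using d1 by simp
  qed
  ultimately show "loc_deg_disk absv f x t \<le> degree f" using ldeg by simp
  have up: "absv (poly f y - poly f x) \<le> t ^ ?m * absv (coeff h 0)"
  proof -
    have "poly f y - poly f x = poly Q (y - x)" by (simp add: polyQ)
    also have "\<dots> = poly (linprod bs) (y - x) * poly h (y - x)" using bh(1) by simp
    finally have e: "poly f y - poly f x = poly (linprod bs) (y - x) * poly h (y - x)" .
    have "absv (poly (linprod bs) (y - x)) \<le> t ^ ?m"
      using linprod_poly_bound[OF bh(2)] t by simp
    moreover have "absv (poly h (y - x)) = absv (coeff h 0)"
      using poly_h[OF bh(4)] t by simp
    ultimately show ?thesis unfolding e by (simp add: av_mult mult_right_mono)
  qed
  have cm: "absv (coeff Q ?m) = absv (coeff h 0)"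
    by (rule coeff_m[OF bh(1) bh(2) bh(4) t(2)])
  have cd: "coeff (pderiv Q) (?m - 1) = of_nat ?m * coeff Q ?m"
  proof -
    have "Suc (?m - 1) = ?m" using m1 by simp
    then show ?thesis by (metis coeff_pderiv)
  qed
  have b0: "y - x \<noteq> 0" using t by auto
  obtain w where w: "absv w \<le> absv (y - x)"
      "\<forall>i. absv (coeff (pderiv Q) i) * absv (y - x) ^ i \<le> absv (poly (pderiv Q) w)"
    using max_modulus[OF b0, of "pderiv Q"] by blast
  have pdQ: "poly (pderiv Q) w = poly (pderiv f) (x + w)"
    by (simp add: Qe pderiv_diff pderiv_pcompose poly_pcompose pderiv_pCons)
  have "absv (of_nat ?m :: 'a) * absv (coeff h 0) * t ^ (?m - 1) \<le> S"
  proof -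
    have "absv (of_nat ?m :: 'a) * absv (coeff h 0) * t ^ (?m - 1) =
          absv (coeff (pderiv Q) (?m - 1)) * absv (y - x) ^ (?m - 1)"
      using cd cm t by (simp add: av_mult)
    also have "\<dots> \<le> absv (poly (pderiv f) (x + w))" using w(2) pdQ by metis
    also have "\<dots> \<le> S" using hS w(1) t by auto
    finally show ?thesis .
  qed
  then have A: "t * (absv (of_nat ?m :: 'a) * absv (coeff h 0) * t ^ (?m - 1)) \<le> t * S"
    using t(2) by (intro mult_left_mono) auto
  have B: "t * (absv (of_nat ?m :: 'a) * absv (coeff h 0) * t ^ (?m - 1)) =
      absv (of_nat ?m :: 'a) * (t ^ ?m * absv (coeff h 0))"
    using m1 by (cases ?m) (auto simp: mult_ac)
  have C: "absv (of_nat ?m :: 'a) * absv (poly f y - poly f x) \<le>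
      absv (of_nat ?m :: 'a) * (t ^ ?m * absv (coeff h 0))"
    using up by (intro mult_left_mono) auto
  have "absv (of_nat ?m :: 'a) * absv (poly f y - poly f x) \<le> t * S" using A B C by linarith
  then show "absv (of_nat (loc_deg_disk absv f x t) :: 'a) * absv (poly f y - poly f x) \<le> t * S"
    using ldeg by simp
qed

end

context nav begin

lemma loc_deg_bounds:
  fixes f :: "'a poly"
  assumes deg: "degree f \<ge> 1" and t: "t > 0"
  shows "1 \<le> loc_deg_disk absv f x t" and "loc_deg_disk absv f x t \<le> degree f"
proof -
  define F where "F = f - [:poly f x:]"
  define Q where "Q = pcompose F [:x, 1:]"
  have Qe: "Q = pcompose f [:x, 1:] - [:poly f x:]" by (simp add: Q_def F_def pcompose_diff)
  have Qnz: "Q \<noteq> 0" unfolding Qe by (rule shift_nz[OF deg])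
  have Fnz: "F \<noteq> 0" using Qnz by (auto simp: Q_def)
  have polyQ: "poly Q w = poly f (x + w) - poly f x" for w by (simp add: Qe poly_pcompose)
  obtain bs h where bh: "Q = linprod bs * h" "\<forall>b\<in>set bs. absv b \<le> t" "coeff h 0 \<noteq> 0"
      "\<forall>j\<ge>1. absv (coeff h j) * t ^ j < absv (coeff h 0)"
    using split_disk[OF Qnz t] by blast
  let ?m = "length bs"
  have hnz: "poly h w \<noteq> 0" if "absv w \<le> t" for w
    using poly_h[OF bh(4) that] t bh(3) by auto
  define W where "W = {w. absv w \<le> t \<and> poly Q w = 0}"
  have Wfin: "finite W" unfolding W_def using poly_roots_finite[OF Qnz] by (auto elim: finite_subset[rotated])
  define Z where "Z = {z. absv (z - x) \<le> t \<and> poly F z = 0}"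
  have ZW: "Z = (\<lambda>w. w + x) ` W"
  proof (rule set_eqI)
    fix z
    have "poly F z = poly Q (z - x)" by (simp add: Q_def poly_pcompose)
    then show "z \<in> Z \<longleftrightarrow> z \<in> (\<lambda>w. w + x) ` W"
      unfolding Z_def W_def by (auto simp: image_iff intro!: exI[of _ "z - x"] simp: Q_def poly_pcompose add.commute)
  qed
  have ldeg: "loc_deg_disk absv f x t = ?m"
  proof -
    have "loc_deg_disk absv f x t = (\<Sum>z\<in>Z. order z F)" by (simp add: loc_deg_disk_def Z_def F_def)
    also have "\<dots> = (\<Sum>w\<in>W. order (w + x) F)" unfolding ZW
      by (subst sum.reindex) (auto simp: inj_on_def)
    also have "\<dots> = (\<Sum>w\<in>W. order w Q)"
      by (intro sum.cong) (simp_all add: Q_def order_shift[OF Fnz])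
    also have "\<dots> = (\<Sum>w\<in>W. count_list bs w)"
    proof (intro sum.cong refl)
      fix w assume "w \<in> W"
      then have "poly h w \<noteq> 0" using hnz by (auto simp: W_def)
      then have "order w h = 0" by (rule order_0I)
      moreover have "order w Q = order w (linprod bs) + order w h"
        unfolding bh(1) by (rule order_mult) (use Qnz bh(1) in simp)
      ultimately show "order w Q = count_list bs w" by (simp add: order_linprod)
    qed
    also have "\<dots> = ?m"
    proof (rule sum_count_set[OF _ Wfin])
      show "set bs \<subseteq> W"
      proof
        fix b assume b: "b \<in> set bs"
        have "poly (linprod bs) b = 0" using linprod_remove1[OF b] by simp
        then show "b \<in> W" using b bh(1,2) by (simp add: W_def)
      qed
    qed
    finally show ?thesis .
  qed
  have m1: "?m \<ge> 1"
  proof -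
    have "poly Q 0 = 0" by (simp add: polyQ)
    then have "poly (linprod bs) 0 = 0" using hnz[of 0] t bh(1) by simp
    then have "bs \<noteq> []" by auto
    then show ?thesis by (cases bs) auto
  qed
  show "1 \<le> loc_deg_disk absv f x t" using m1 ldeg by simp
  have "degree Q = ?m + degree h"
    using bh(1) Qnz by (simp add: degree_mult_eq degree_linprod)
  moreover have "degree Q = degree f"
  proof -
    have d1: "degree (pcompose f [:x, 1:]) = degree f" by (simp add: degree_pcompose)
    have "degree (pcompose f [:x, 1:] + [:- poly f x:]) = degree (pcompose f [:x, 1:])"
      by (rule degree_add_eq_left) (use d1 deg in simp)
    moreover have "pcompose f [:x, 1:] + [:- poly f x:] = Q" by (simp add: Qe)
    ultimately show ?thesis using d1 by simp
  qed
  ultimately show "loc_deg_disk absv f x t \<le> degree f" using ldeg by simp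
qed

lemma kappa_bound:
  fixes f :: "'a poly"
  assumes deg: "degree f \<ge> 1" and t: "t > 0"
  shows "res_p absv powr kappa absv f \<le> absv (of_nat (loc_deg_disk absv f x t) :: 'a)"
proof -
  let ?U = "{loc_deg_pt f x |x. True} \<union> {loc_deg_disk absv f a r | a r. r > 0}"
  let ?g = "\<lambda>k::nat. log (res_p absv) (absv (of_nat k :: 'a))"
  have Usub: "?U \<subseteq> {..degree f}"
  proof
    fix k assume "k \<in> ?U"
    then consider (pt) x' where "k = loc_deg_pt f x'" | (dk) a r where "k = loc_deg_disk absv f a r" "r > 0"
      by blast
    then show "k \<in> {..degree f}"
    proof cases
      case pt
      have nz: "f - [:poly f x':] \<noteq> 0"
      proof
        assume "f - [:poly f x':] = 0"
        then have "f = [:poly f x':]" by simp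
        then show False using deg by (metis degree_pCons_0 not_one_le_zero)
      qed
      have "order x' (f - [:poly f x':]) \<le> degree (f - [:poly f x':])" by (rule order_degree[OF nz])
      also have "\<dots> \<le> max (degree f) (degree [:poly f x':])" by (rule degree_diff_le_max)
      finally show ?thesis using pt by (simp add: loc_deg_pt_def)
    next
      case dk
      then show ?thesis using loc_deg_bounds(2)[OF deg dk(2)] by simp
    qed
  qed
  have fin: "finite (?g ` ?U)" using Usub by (intro finite_imageI) (auto elim: finite_subset)
  have mem: "loc_deg_disk absv f x t \<in> ?U" using t by blast
  have "kappa absv f \<le> ?g (loc_deg_disk absv f x t)"
    unfolding kappa_def by (rule Min_le[OF fin]) (use mem in blast)
  moreover have p1: "res_p absv > 1" by (rule res_p_gt1)
  moreover have pos: "absv (of_nat (loc_deg_disk absv f x t) :: 'a) > 0"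
    using loc_deg_bounds(1)[OF deg t, of x] by (intro av_of_nat_pos) simp
  ultimately have "res_p absv powr kappa absv f \<le> res_p absv powr (?g (loc_deg_disk absv f x t))"
    by (intro powr_mono) auto
  also have "\<dots> = absv (of_nat (loc_deg_disk absv f x t) :: 'a)"
    using p1 pos by simp
  finally show ?thesis .
qed

end

locale dyn = nav absv for absv :: "'a::field_char_0 \<Rightarrow> real" +
  fixes f :: "'a poly"
  assumes deg2: "degree f \<ge> 2"
begin

abbreviation "F \<equiv> poly f"
abbreviation "KK \<equiv> filledK absv f"

lemma deg1: "degree f \<ge> 1" using deg2 by simp

lemma funpow_shift: "(F ^^ n) (F x) = (F ^^ Suc n) x"
  by (simp add: funpow_swap1)

lemma K_forward: "x \<in> KK \<Longrightarrow> F x \<in> KK"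
proof -
  assume x: "x \<in> KK"
  show "F x \<in> KK"
  proof (rule ccontr)
    assume "F x \<notin> KK"
    then have "filterlim (\<lambda>n. absv ((F ^^ n) (F x))) at_top sequentially"
      by (simp add: filledK_def)
    then have "filterlim (\<lambda>n. absv ((F ^^ Suc n) x)) at_top sequentially"
      by (simp add: funpow_shift)
    then have "filterlim (\<lambda>n. absv ((F ^^ n) x)) at_top sequentially"
      by (rule filterlim_sequentially_Suc[THEN iffD1])
    then show False using x by (simp add: filledK_def)
  qed
qed

lemma K_iter: "x \<in> KK \<Longrightarrow> (F ^^ j) x \<in> KK"
  by (induction j) (auto intro: K_forward)

lemma bounded_in_K:
  assumes "\<forall>n. absv ((F ^^ n) z) \<le> B"
  shows "z \<in> KK"
proof -
  have "\<not> filterlim (\<lambda>n. absv ((F ^^ n) z)) at_top sequentially"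
  proof
    assume "filterlim (\<lambda>n. absv ((F ^^ n) z)) at_top sequentially"
    then have "eventually (\<lambda>n. B + 1 \<le> absv ((F ^^ n) z)) sequentially"
      by (simp add: filterlim_at_top)
    then obtain n where "B + 1 \<le> absv ((F ^^ n) z)" by (auto simp: eventually_sequentially)
    then show False using assms by (smt (verit))
  qed
  then show ?thesis by (simp add: filledK_def)
qed

end

context dyn begin

definition "escA = lead_coeff f"
definition "escB = 2 / absv escA + 1 + (\<Sum>i<degree f. absv (coeff f i) / absv escA)"

lemma escA0: "absv escA > 0" using deg2 by (intro av_pos) (auto simp: escA_def)

lemma escB1: "escB \<ge> 1"
proof -
  have sn: "0 \<le> (\<Sum>i<degree f. absv (coeff f i) / absv escA)" by (intro sum_nonneg) simp
  have "0 \<le> 2 / absv escA" using escA0 by simp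
  then show ?thesis unfolding escB_def using sn by linarith
qed

lemma escBi: "i < degree f \<Longrightarrow> absv (coeff f i) \<le> absv escA * escB"
proof -
  assume i: "i < degree f"
  have sn: "0 \<le> (\<Sum>i<degree f. absv (coeff f i) / absv escA)" by (intro sum_nonneg) simp
  have "absv (coeff f i) / absv escA \<le> (\<Sum>i<degree f. absv (coeff f i) / absv escA)"
    using i by (intro member_le_sum) auto
  also have "\<dots> \<le> escB" unfolding escB_def using escA0 by simp
  finally have "absv (coeff f i) / absv escA \<le> escB" .
  then show ?thesis using escA0 by (simp add: divide_le_eq mult.commute)
qed

lemma escB2: "absv escA * escB \<ge> 2"
proof -
  have sn: "0 \<le> (\<Sum>i<degree f. absv (coeff f i) / absv escA)" by (intro sum_nonneg) simp
  have "absv escA * escB \<ge> absv escA * (2 / absv escA)" unfolding escB_def using escA0 sn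
    by (intro mult_left_mono) auto
  moreover have "absv escA * (2 / absv escA) = 2"
  proof -
    have "absv escA \<noteq> 0" using escA0 by linarith
    then show ?thesis unfolding times_divide_eq_right by (rule nonzero_mult_div_cancel_left)
  qed
  ultimately show ?thesis by simp
qed

lemma esc_poly_split: "F z = escA * z ^ degree f + (\<Sum>i<degree f. coeff f i * z ^ i)"
proof -
  have "F z = (\<Sum>i<Suc (degree f). coeff f i * z ^ i)" by (simp add: poly_altdef lessThan_Suc_atMost)
  also have "\<dots> = escA * z ^ degree f + (\<Sum>i<degree f. coeff f i * z ^ i)" by (simp add: escA_def)
  finally show ?thesis .
qed

lemma esc_step:
  assumes z: "absv z > escB"
  shows "absv (F z) \<ge> 2 * absv z"
proof -
  let ?d = "degree f"
  have z1: "absv z > 1" using z escB1 by simp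
  have A0: "absv escA > 0" by (rule escA0)
  have lt: "absv (\<Sum>i<?d. coeff f i * z ^ i) < absv (escA * z ^ ?d)"
  proof (rule av_sum_less)
    show "absv (escA * z ^ ?d) > 0" using A0 z1 by (simp add: av_mult av_power)
    fix i assume i: "i \<in> {..<?d}"
    have "absv escA * escB < absv escA * absv z" using z A0 by (intro mult_strict_left_mono) auto
    then have ci: "absv (coeff f i) < absv escA * absv z" using escBi[of i] i by simp
    have "absv (coeff f i * z ^ i) = absv (coeff f i) * absv z ^ i" by (simp add: av_mult av_power)
    also have "\<dots> < absv escA * absv z * absv z ^ i"
      using ci z1 by (intro mult_strict_right_mono) auto
    also have "\<dots> = absv escA * absv z ^ Suc i" by simp
    also have "\<dots> \<le> absv escA * absv z ^ ?d"
      using i z1 A0 by (intro mult_left_mono power_increasing) auto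
    finally show "absv (coeff f i * z ^ i) < absv (escA * z ^ ?d)" by (simp add: av_mult av_power)
  qed simp
  have "absv (F z) = absv (escA * z ^ ?d)" unfolding esc_poly_split by (rule av_strict[OF lt])
  also have "\<dots> = absv escA * absv z ^ ?d" by (simp add: av_mult av_power)
  also have "\<dots> \<ge> absv escA * absv z ^ 2"
    using deg2 z1 A0 by (intro mult_left_mono power_increasing) auto
  finally have X: "absv (F z) \<ge> (absv escA * absv z) * absv z" by (simp add: power2_eq_square mult.assoc)
  have "absv escA * escB < absv escA * absv z" using z A0 by (intro mult_strict_left_mono) auto
  then have "absv escA * absv z \<ge> 2" using escB2 by simp
  then have "(absv escA * absv z) * absv z \<ge> 2 * absv z" by (intro mult_right_mono) auto
  then show ?thesis using X by simp
qed

lemma esc_grow: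
  assumes z: "absv z > escB"
  shows "absv ((F ^^ n) z) \<ge> (real n + 1) * absv z \<and> absv ((F ^^ n) z) > escB"
proof (induction n)
  case 0 then show ?case using z by simp
next
  case (Suc n)
  let ?w = "(F ^^ n) z"
  have IH: "absv ?w \<ge> (real n + 1) * absv z" "absv ?w > escB" using Suc by auto
  have Y: "absv (F ?w) \<ge> 2 * absv ?w" by (rule esc_step[OF IH(2)])
  have zp: "absv z > 0" using z escB1 by simp
  have zw: "absv z \<le> (real n + 1) * absv z"
    using mult_nonneg_nonneg[of "real n" "absv z"] zp by (simp add: distrib_right)
  have "(real (Suc n) + 1) * absv z = (real n + 1) * absv z + absv z" by (simp add: algebra_simps)
  also have "\<dots> \<le> absv ?w + absv ?w" using IH(1) zw by linarith
  also have "\<dots> \<le> absv (F ?w)" using Y by linarith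
  finally have c1: "(real (Suc n) + 1) * absv z \<le> absv (F ?w)" .
  have c2: "absv (F ?w) > escB" using Y IH(2) escB1 by linarith
  have e: "(F ^^ Suc n) z = F ?w" by simp
  show ?case unfolding e using c1 c2 by simp
qed

lemma esc_notin:
  assumes z: "absv z > escB" shows "z \<notin> KK"
proof -
  have zp: "absv z > 0" using z escB1 by simp
  have "filterlim (\<lambda>n. absv z * real n) at_top sequentially"
    by (rule filterlim_tendsto_pos_mult_at_top[OF tendsto_const zp filterlim_real_sequentially])
  moreover have "eventually (\<lambda>n. absv z * real n \<le> absv ((F ^^ n) z)) sequentially"
  proof (rule always_eventually, rule allI)
    fix n
    have "absv z * real n \<le> (real n + 1) * absv z" using zp by (simp add: algebra_simps)
    then show "absv z * real n \<le> absv ((F ^^ n) z)" using esc_grow[OF z, of n] by linarith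
  qed
  ultimately have "filterlim (\<lambda>n. absv ((F ^^ n) z)) at_top sequentially"
    by (rule filterlim_at_top_mono)
  then show "z \<notin> KK" by (simp add: filledK_def)
qed

abbreviation "ctr \<equiv> base_center absv f"
abbreviation "RR \<equiv> Rf absv f"
abbreviation "SS \<equiv> supnorm absv (pderiv f) ctr RR"
abbreviation "XX \<equiv> Xi absv f"

lemma ctr_in_K: "KK \<noteq> {} \<Longrightarrow> ctr \<in> KK"
  unfolding base_center_def by (rule someI_ex) auto

lemma R_props:
  assumes Kne: "KK \<noteq> {}"
  shows "RR \<ge> 0" and "\<And>y. y \<in> KK \<Longrightarrow> absv (y - ctr) \<le> RR"
proof -
  define Rset where "Rset = {r. r \<ge> 0 \<and> (\<exists>a. KK \<subseteq> {y. absv (y - a) \<le> r})}"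
  have RR: "RR = Inf Rset" by (simp add: Rf_def Rset_def)
  have "escB \<in> Rset"
  proof -
    have "KK \<subseteq> {y. absv (y - 0) \<le> escB}"
    proof
      fix y assume "y \<in> KK"
      then have "\<not> absv y > escB" using esc_notin by blast
      then show "y \<in> {y. absv (y - 0) \<le> escB}" by simp
    qed
    then have "\<exists>a. KK \<subseteq> {y. absv (y - a) \<le> escB}" by (rule exI)
    then show ?thesis using escB1 unfolding Rset_def by auto
  qed
  then have ne: "Rset \<noteq> {}" by auto
  show "RR \<ge> 0" unfolding RR by (rule cInf_greatest[OF ne]) (auto simp: Rset_def)
  fix y assume y: "y \<in> KK"
  have c: "ctr \<in> KK" by (rule ctr_in_K[OF Kne])
  show "absv (y - ctr) \<le> RR" unfolding RR
  proof (rule cInf_greatest[OF ne])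
    fix r assume "r \<in> Rset"
    then obtain a where a: "KK \<subseteq> {y. absv (y - a) \<le> r}" unfolding Rset_def by auto
    have "absv (y - a) \<le> r" "absv (ctr - a) \<le> r" using a y c by auto
    moreover have "y - ctr = (y - a) - (ctr - a)" by simp
    ultimately show "absv (y - ctr) \<le> r" using av_diff[of "y - a" "ctr - a"] by simp
  qed
qed

lemma supnorm_bound:
  assumes z: "absv (z - a) \<le> r"
  shows "absv (poly g z) \<le> supnorm absv g a r"
proof -
  let ?X = "(\<lambda>z. absv (poly g z)) ` {z. absv (z - a) \<le> r}"
  define M where "M = (\<Sum>i\<le>degree g. absv (coeff g i) * (absv a + r) ^ i)"
  have bdd: "bdd_above ?X"
  proof (rule bdd_aboveI2)
    fix w assume w: "w \<in> {z. absv (z - a) \<le> r}"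
    have r0: "r \<ge> 0" using w av_nonneg[of "w - a"] by (simp del: av_nonneg)
    have wb: "absv w \<le> absv a + r"
    proof -
      have "w = (w - a) + a" by simp
      then have "absv w \<le> absv (w - a) + absv a" by (metis av_tri)
      then show ?thesis using w by simp
    qed
    have "absv (poly g w) = absv (\<Sum>i\<le>degree g. coeff g i * w ^ i)" by (simp add: poly_altdef)
    also have "\<dots> \<le> (\<Sum>i\<le>degree g. absv (coeff g i * w ^ i))" by (rule av_sum_tri)
    also have "\<dots> \<le> M" unfolding M_def
    proof (rule sum_mono)
      fix i
      have "absv (coeff g i * w ^ i) = absv (coeff g i) * absv w ^ i" by (simp add: av_mult av_power)
      also have "\<dots> \<le> absv (coeff g i) * (absv a + r) ^ i"
        using wb by (intro mult_left_mono power_mono) auto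
      finally show "absv (coeff g i * w ^ i) \<le> absv (coeff g i) * (absv a + r) ^ i" .
    qed
    finally show "absv (poly g w) \<le> M" .
  qed
  show ?thesis unfolding supnorm_def by (rule cSup_upper) (use z bdd in auto)
qed

lemma lipA:
  assumes Kne: "KK \<noteq> {}" and x: "absv (x - ctr) \<le> RR" and y: "absv (y - x) \<le> RR"
  shows "absv (F y - F x) \<le> XX * absv (y - x)"
proof (cases "y = x")
  case True then show ?thesis by simp
next
  case False
  define t where "t = absv (y - x)"
  have t0: "t > 0" using False by (simp add: t_def av_pos)
  have hS: "\<forall>z. absv (z - x) \<le> t \<longrightarrow> absv (poly (pderiv f) z) \<le> SS"
  proof (intro allI impI)
    fix z assume z: "absv (z - x) \<le> t"
    have "z - ctr = (z - x) + (x - ctr)" by simp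
    then have "absv (z - ctr) \<le> max (absv (z - x)) (absv (x - ctr))" by (metis av_ultra)
    then have "absv (z - ctr) \<le> RR" using z x y by (simp add: t_def)
    then show "absv (poly (pderiv f) z) \<le> SS" by (rule supnorm_bound)
  qed
  let ?m = "absv (of_nat (loc_deg_disk absv f x t) :: 'a)"
  let ?p = "res_p absv"
  let ?k = "kappa absv f"
  have est: "?m * absv (F y - F x) \<le> t * SS"
    using local_deg_est(1)[OF deg1 t_def[symmetric] t0 hS] .
  have kb: "?p powr ?k \<le> ?m" by (rule kappa_bound[OF deg1 t0])
  have p0: "?p > 0" using res_p_gt1 by simp
  have "?p powr ?k * absv (F y - F x) \<le> ?m * absv (F y - F x)"
    using kb by (intro mult_right_mono) auto
  also have "\<dots> \<le> t * SS" by (rule est)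
  finally have A: "?p powr ?k * absv (F y - F x) \<le> t * SS" .
  have "absv (F y - F x) = ?p powr (- ?k) * (?p powr ?k * absv (F y - F x))"
    using p0 by (simp add: powr_minus field_simps)
  also have "\<dots> \<le> ?p powr (- ?k) * (t * SS)" using A by (intro mult_left_mono) auto
  also have "\<dots> = XX * t" by (simp add: Xi_def mult_ac)
  finally show ?thesis by (simp add: t_def)
qed

end

context dyn begin

lemma crit_finite: "finite (crit f)"
proof -
  have "pderiv f \<noteq> 0" using deg1 by (simp add: pderiv_eq_0_iff)
  then show ?thesis unfolding crit_def by (rule poly_roots_finite)
qed

lemma taylor_crit_one:
  assumes c: "c \<in> crit f" and R0: "r > 0"
  shows "\<exists>C\<ge>0. \<forall>w. absv w \<le> r \<longrightarrow> absv (F (c + w) - F c) \<le> C * absv w ^ 2"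
proof -
  define G where "G = pcompose f [:c, 1:] - [:F c:]"
  have pG: "poly G w = F (c + w) - F c" for w by (simp add: G_def poly_pcompose)
  have g0: "coeff G 0 = 0" using pG[of 0] by (simp add: poly_0_coeff_0[symmetric])
  have "pderiv G = pcompose (pderiv f) [:c, 1:]"
    by (simp add: G_def pderiv_diff pderiv_pcompose pderiv_pCons)
  then have "poly (pderiv G) 0 = 0" using c by (simp add: crit_def poly_pcompose)
  then have g1: "coeff G 1 = 0" by (simp add: poly_0_coeff_0 coeff_pderiv)
  define C where "C = (\<Sum>i\<le>degree G. absv (coeff G i) * r ^ (i - 2))"
  have C0: "C \<ge> 0" unfolding C_def using R0 by (intro sum_nonneg) simp
  show ?thesis
  proof (intro exI[of _ C] conjI allI impI C0)
    fix w assume w: "absv w \<le> r"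
    have "F (c + w) - F c = (\<Sum>i\<le>degree G. coeff G i * w ^ i)"
      unfolding pG[symmetric] by (rule poly_altdef)
    then have "absv (F (c + w) - F c) = absv (\<Sum>i\<le>degree G. coeff G i * w ^ i)" by simp
    also have "\<dots> \<le> (\<Sum>i\<le>degree G. absv (coeff G i * w ^ i))" by (rule av_sum_tri)
    also have "\<dots> \<le> (\<Sum>i\<le>degree G. absv (coeff G i) * r ^ (i - 2) * absv w ^ 2)"
    proof (rule sum_mono)
      fix i
      show "absv (coeff G i * w ^ i) \<le> absv (coeff G i) * r ^ (i - 2) * absv w ^ 2"
      proof (cases "i < 2")
        case True
        then have "i = 0 \<or> i = 1" by auto
        then show ?thesis using g0 g1 R0 by auto
      next
        case False
        have ii: "i = (i - 2) + 2" using False by simp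
        have "absv w ^ i = absv w ^ (i - 2) * absv w ^ 2" by (subst ii, rule power_add)
        then have "absv (coeff G i * w ^ i) = absv (coeff G i) * (absv w ^ (i - 2) * absv w ^ 2)"
          by (simp add: av_mult av_power)
        also have "\<dots> \<le> absv (coeff G i) * (r ^ (i - 2) * absv w ^ 2)"
          using w by (intro mult_left_mono mult_right_mono power_mono) auto
        finally show ?thesis by (simp add: mult_ac)
      qed
    qed
    also have "\<dots> = C * absv w ^ 2" unfolding C_def by (simp add: sum_distrib_right)
    finally show "absv (F (c + w) - F c) \<le> C * absv w ^ 2" .
  qed
qed

lemma taylor_crit:
  assumes R0: "r > 0"
  shows "\<exists>C\<ge>0. \<forall>c\<in>crit f. \<forall>w. absv w \<le> r \<longrightarrow> absv (F (c + w) - F c) \<le> C * absv w ^ 2"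
proof -
  have "\<forall>c\<in>crit f. \<exists>C\<ge>0. \<forall>w. absv w \<le> r \<longrightarrow> absv (F (c + w) - F c) \<le> C * absv w ^ 2"
    using taylor_crit_one[OF _ R0] by blast
  then obtain Cf where Cf: "\<And>c. c \<in> crit f \<Longrightarrow> Cf c \<ge> 0 \<and> (\<forall>w. absv w \<le> r \<longrightarrow> absv (F (c + w) - F c) \<le> Cf c * absv w ^ 2)"
    by metis
  define C where "C = (\<Sum>c\<in>crit f. Cf c)"
  have C0: "C \<ge> 0" unfolding C_def using Cf by (intro sum_nonneg) auto
  have CC: "Cf c \<le> C" if "c \<in> crit f" for c
    unfolding C_def using crit_finite that Cf by (intro member_le_sum) auto
  show ?thesis
  proof (intro exI[of _ C] conjI ballI allI impI C0)
    fix c w assume c: "c \<in> crit f" and w: "absv w \<le> r"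
    have "absv (F (c + w) - F c) \<le> Cf c * absv w ^ 2" using Cf[OF c] w by blast
    also have "\<dots> \<le> C * absv w ^ 2" using CC[OF c] by (intro mult_right_mono) auto
    finally show "absv (F (c + w) - F c) \<le> C * absv w ^ 2" .
  qed
qed

lemma poly_fiter: "poly (fiter f n) = F ^^ n"
proof (induction n)
  case 0 then show ?case by (simp add: fiter_def fun_eq_iff)
next
  case (Suc n)
  have "fiter f (Suc n) = pcompose f (fiter f n)" by (simp add: fiter_def)
  then show ?case using Suc by (simp add: fun_eq_iff poly_pcompose)
qed

lemma critvals_char:
  "poly (pderiv (fiter f n)) w = 0 \<Longrightarrow> \<exists>c\<in>crit f. \<exists>k. 1 \<le> k \<and> k \<le> n \<and> poly (fiter f n) w = (F ^^ k) c"
proof (induction n arbitrary: w)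
  case 0
  then show ?case by (simp add: fiter_def pderiv_pCons)
next
  case (Suc n)
  let ?q = "fiter f n"
  have e: "fiter f (Suc n) = pcompose f ?q" by (simp add: fiter_def)
  have "poly (pderiv (fiter f (Suc n))) w = poly (pderiv f) (poly ?q w) * poly (pderiv ?q) w"
    by (simp add: e pderiv_pcompose poly_pcompose)
  then have "poly (pderiv f) (poly ?q w) = 0 \<or> poly (pderiv ?q) w = 0" using Suc.prems by simp
  then show ?case
  proof
    assume h: "poly (pderiv f) (poly ?q w) = 0"
    show ?thesis
      by (rule bexI[of _ "poly ?q w"], rule exI[of _ 1]) (use h in \<open>simp_all add: e poly_pcompose crit_def\<close>)
  next
    assume "poly (pderiv ?q) w = 0"
    then obtain c k where ck: "c \<in> crit f" "1 \<le> k" "k \<le> n" "poly ?q w = (F ^^ k) c"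
      using Suc.IH by blast
    show ?thesis
      by (rule bexI[of _ c], rule exI[of _ "Suc k"]) (use ck in \<open>simp_all add: e poly_pcompose\<close>)
  qed
qed

lemma critvals_sub: "critvals f n \<subseteq> (\<lambda>(c, k). (F ^^ k) c) ` (crit f \<times> {1..n})"
proof
  fix v assume "v \<in> critvals f n"
  then obtain w where w: "v = poly (fiter f n) w" "poly (pderiv (fiter f n)) w = 0"
    by (auto simp: critvals_def)
  then obtain c k where "c \<in> crit f" "1 \<le> k" "k \<le> n" "v = (F ^^ k) c"
    using critvals_char by metis
  then show "v \<in> (\<lambda>(c, k). (F ^^ k) c) ` (crit f \<times> {1..n})" by force
qed

lemma critvals_finite: "finite (critvals f n)"
  by (rule finite_subset[OF critvals_sub]) (simp add: crit_finite)

end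

context dyn begin

lemma iter_lip:
  assumes Kne: "KK \<noteq> {}" and x: "x \<in> KK" and yx: "absv (y - x) \<le> \<delta>" and X1: "XX \<ge> 1"
  shows "XX ^ J * \<delta> \<le> RR \<Longrightarrow> absv ((F ^^ J) y - (F ^^ J) x) \<le> XX ^ J * \<delta>"
proof (induction J)
  case 0 then show ?case using yx by simp
next
  case (Suc J)
  have d0: "\<delta> \<ge> 0" using yx av_nonneg[of "y - x"] by linarith
  have "XX ^ J * \<delta> \<le> XX ^ Suc J * \<delta>"
    using X1 d0 by (intro mult_right_mono power_increasing) auto
  then have J: "XX ^ J * \<delta> \<le> RR" using Suc.prems by linarith
  have IH: "absv ((F ^^ J) y - (F ^^ J) x) \<le> XX ^ J * \<delta>" by (rule Suc.IH[OF J])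
  have xK: "(F ^^ J) x \<in> KK" by (rule K_iter[OF x])
  have "absv (F ((F ^^ J) y) - F ((F ^^ J) x)) \<le> XX * absv ((F ^^ J) y - (F ^^ J) x)"
    by (rule lipA[OF Kne R_props(2)[OF Kne xK]]) (use IH J in linarith)
  also have "\<dots> \<le> XX * (XX ^ J * \<delta>)" using IH X1 by (intro mult_left_mono) auto
  finally show ?case by simp
qed

lemma orbit_bounded_in_K:
  assumes "\<forall>k. absv ((F ^^ k) z - ctr) \<le> RR"
  shows "z \<in> KK"
proof (rule bounded_in_K)
  show "\<forall>n. absv ((F ^^ n) z) \<le> absv ctr + RR"
  proof
    fix n
    have "(F ^^ n) z = ((F ^^ n) z - ctr) + ctr" by simp
    then have "absv ((F ^^ n) z) \<le> absv ((F ^^ n) z - ctr) + absv ctr" by (metis av_tri)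
    then show "absv ((F ^^ n) z) \<le> absv ctr + RR" using assms by (smt (verit))
  qed
qed

lemma ball_in_ball:
  assumes "absv (y - c) \<le> r" "absv (c - ctr) \<le> r"
  shows "absv (y - ctr) \<le> r"
proof -
  have "y - ctr = (y - c) + (c - ctr)" by simp
  then have "absv (y - ctr) \<le> max (absv (y - c)) (absv (c - ctr))" by (metis av_ultra)
  then show ?thesis using assms by simp
qed

lemma small_xi_false:
  assumes Kne: "KK \<noteq> {}" and R0: "RR > 0" and X1: "XX \<le> 1" and c: "c \<in> juliaK absv f"
  shows False
proof -
  have cK: "c \<in> KK" using c by (simp add: juliaK_def)
  have inv: "absv (F w - ctr) \<le> RR" if w: "absv (w - ctr) \<le> RR" for w
  proof -
    have "absv (F w - F ctr) \<le> XX * absv (w - ctr)"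
      by (rule lipA[OF Kne _ w]) (use R0 in simp)
    also have "\<dots> \<le> 1 * absv (w - ctr)" using X1 by (intro mult_right_mono) auto
    finally have a: "absv (F w - F ctr) \<le> RR" using w by simp
    have b: "absv (F ctr - ctr) \<le> RR" by (rule R_props(2)[OF Kne K_forward[OF ctr_in_K[OF Kne]]])
    show ?thesis by (rule ball_in_ball[OF a b])
  qed
  have allK: "y \<in> KK" if y: "absv (y - ctr) \<le> RR" for y
  proof (rule orbit_bounded_in_K)
    show "\<forall>k. absv ((F ^^ k) y - ctr) \<le> RR"
    proof
      fix k show "absv ((F ^^ k) y - ctr) \<le> RR"
        by (induction k) (simp_all add: y inv)
    qed
  qed
  obtain y where y: "absv (y - c) < RR" "y \<notin> KK" using c R0 by (auto simp: juliaK_def)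
  have "absv (y - ctr) \<le> RR"
    by (rule ball_in_ball[of _ c]) (use y R_props(2)[OF Kne cK] in auto)
  then show False using allK y(2) by blast
qed

lemma main_case:
  assumes Kne: "KK \<noteq> {}" and R0: "RR > 0" and X1: "XX > 1"
  shows "\<exists>N\<ge>1. \<forall>c\<in>crit f \<inter> juliaK absv f. \<forall>n\<ge>N.
            card (critvals f n \<inter> Ds absv f (real n) c) \<le> 2 * card (crit f)"
proof -
  obtain C where C0: "C \<ge> 0" and
    CT: "\<And>c w. c \<in> crit f \<Longrightarrow> absv w \<le> RR \<Longrightarrow> absv (F (c + w) - F c) \<le> C * absv w ^ 2"
    using taylor_crit[OF R0] by blast
  obtain C0' :: nat where C0': "C * RR < XX ^ C0'" using real_arch_pow[OF X1] by blast
  define N where "N = 2 * C0' + 1"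
  have XXp: "XX > 0" using X1 by simp
  show ?thesis
  proof (intro exI[of _ N] conjI ballI allI impI)
    show "N \<ge> 1" by (simp add: N_def)
    fix c n assume cJ: "c \<in> crit f \<inter> juliaK absv f" and nN: "N \<le> n"
    have cc: "c \<in> crit f" using cJ by simp
    have cjul: "c \<in> juliaK absv f" using cJ by simp
    have cK: "c \<in> KK" using cjul by (simp add: juliaK_def)
    define r where "r = RR / XX ^ n"
    have Xn: "XX ^ n \<ge> 1" using X1 by simp
    have r0: "r > 0" unfolding r_def using R0 XXp by simp
    have rR: "r \<le> RR" unfolding r_def using R0 Xn by (simp add: divide_le_eq)
    have Dse: "Ds absv f (real n) c = {y. absv (y - c) < r}"
      unfolding Ds_def r_def using XXp by (simp add: powr_minus powr_realpow divide_inverse)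
    define \<delta> where "\<delta> = C * r ^ 2"
    have key: "XX ^ j * \<delta> < r" if j: "j + C0' < n" for j
    proof -
      have "XX ^ j * (C * RR) \<le> XX ^ j * XX ^ C0'" using C0' XXp by (intro mult_left_mono) auto
      moreover have "XX ^ j * (C * RR) < XX ^ j * XX ^ C0' \<or> C * RR = XX ^ C0'"
        using C0' XXp by auto
      then have "XX ^ j * (C * RR) < XX ^ (j + C0')" using C0' XXp by (auto simp: power_add)
      moreover have "XX ^ (j + C0') \<le> XX ^ n" using j X1 by (intro power_increasing) auto
      ultimately have lt: "XX ^ j * (C * RR) < XX ^ n" by linarith
      have "XX ^ j * \<delta> = (XX ^ j * (C * RR) / XX ^ n) * r"
        unfolding \<delta>_def r_def by (simp add: power2_eq_square field_simps)
      also have "\<dots> < 1 * r" using lt r0 XXp by (intro mult_strict_right_mono) (auto simp: divide_less_eq)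
      finally show ?thesis by simp
    qed
    have shadow: "absv ((F ^^ i) z - (F ^^ i) c) \<le> XX ^ (i - 1) * \<delta>"
      if z: "absv (z - c) < r" and i: "1 \<le> i" "i - 1 + C0' < n" for z i
    proof -
      have "absv (F (c + (z - c)) - F c) \<le> C * absv (z - c) ^ 2"
        by (rule CT[OF cc]) (use z rR in linarith)
      moreover have "C * absv (z - c) ^ 2 \<le> \<delta>" unfolding \<delta>_def
        using z C0 by (intro mult_left_mono power_mono) auto
      ultimately have d1: "absv (F z - F c) \<le> \<delta>" by simp
      have "absv ((F ^^ (i - 1)) (F z) - (F ^^ (i - 1)) (F c)) \<le> XX ^ (i - 1) * \<delta>"
        by (rule iter_lip[OF Kne K_forward[OF cK] d1]) (use X1 key[OF i(2)] rR in auto)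
      moreover have "Suc (i - 1) = i" using i by simp
      ultimately show ?thesis by (metis funpow_shift)
    qed
    have noret: False if y: "absv (y - c) < r" and m: "1 \<le> m" "m + C0' \<le> n"
        and ym: "absv ((F ^^ m) y - c) < r" for y m
    proof -
      have mk: "m - 1 + C0' < n" using m by simp
      have sh_lt: "absv ((F ^^ m) z - (F ^^ m) c) < r" if "absv (z - c) < r" for z
        using shadow[OF that m(1) mk] key[OF mk] by linarith
      have invar: "absv ((F ^^ m) z - c) < r" if z: "absv (z - c) < r" for z
      proof -
        have "(F ^^ m) z - c = ((F ^^ m) z - (F ^^ m) c) - ((F ^^ m) y - (F ^^ m) c) + ((F ^^ m) y - c)"
          by simp
        then have "absv ((F ^^ m) z - c) \<le> max (absv (((F ^^ m) z - (F ^^ m) c) - ((F ^^ m) y - (F ^^ m) c))) (absv ((F ^^ m) y - c))"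
          by (metis av_ultra)
        moreover have "absv (((F ^^ m) z - (F ^^ m) c) - ((F ^^ m) y - (F ^^ m) c)) \<le>
            max (absv ((F ^^ m) z - (F ^^ m) c)) (absv ((F ^^ m) y - (F ^^ m) c))" by (rule av_diff)
        ultimately show ?thesis using sh_lt[OF z] sh_lt[OF y] ym by simp
      qed
      have cR: "absv (c - ctr) \<le> RR" by (rule R_props(2)[OF Kne cK])
      have allK: "z \<in> KK" if z: "absv (z - c) < r" for z
      proof (rule orbit_bounded_in_K, rule allI)
        fix k
        have jm: "absv ((F ^^ (j * m)) z - c) < r" for j
        proof (induction j)
          case 0 then show ?case using z by simp
        next
          case (Suc j)
          have sj: "Suc j * m = m + j * m" by simp
          have e: "(F ^^ (Suc j * m)) z = (F ^^ m) ((F ^^ (j * m)) z)"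
            unfolding sj by (simp only: funpow_add comp_def)
          show ?case unfolding e by (rule invar[OF Suc.IH])
        qed
        define w where "w = (F ^^ (k div m * m)) z"
        have w: "absv (w - c) < r" unfolding w_def by (rule jm)
        have kw: "(F ^^ k) z = (F ^^ (k mod m)) w"
        proof -
          have "(F ^^ k) z = (F ^^ (k mod m + k div m * m)) z" by (simp only: mod_div_mult_eq)
          also have "\<dots> = (F ^^ (k mod m)) ((F ^^ (k div m * m)) z)" by (simp only: funpow_add comp_def)
          finally show ?thesis unfolding w_def .
        qed
        show "absv ((F ^^ k) z - ctr) \<le> RR"
        proof (cases "k mod m = 0")
          case True
          then have "(F ^^ k) z = w" using kw by simp
          moreover have "absv (w - c) \<le> RR" using w rR by linarith
          ultimately show ?thesis using cR ball_in_ball[of w c RR] by simp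
        next
          case False
          let ?i = "k mod m"
          have i1: "1 \<le> ?i" using False by simp
          have im: "?i < m" using m by simp
          have ik: "?i - 1 + C0' < n" using im m(2) by arith
          have s1: "absv ((F ^^ ?i) w - (F ^^ ?i) c) \<le> XX ^ (?i - 1) * \<delta>" by (rule shadow[OF w i1 ik])
          have "absv ((F ^^ ?i) w - (F ^^ ?i) c) \<le> RR" using s1 key[OF ik] rR by linarith
          moreover have "absv ((F ^^ ?i) c - ctr) \<le> RR" by (rule R_props(2)[OF Kne K_iter[OF cK]])
          ultimately have "absv ((F ^^ ?i) w - ctr) \<le> RR" by (rule ball_in_ball)
          then show ?thesis using kw by simp
        qed
      qed
      obtain z where "absv (z - c) < r" "z \<notin> KK" using cjul r0 by (auto simp: juliaK_def)
      then show False using allK by blast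
    qed
    define T where "T c' = {k. 1 \<le> k \<and> k \<le> n \<and> absv ((F ^^ k) c' - c) < r}" for c'
    have gap: "k2 - k1 + C0' > n" if "k1 \<in> T c'" "k2 \<in> T c'" "k1 < k2" for c' k1 k2
    proof (rule ccontr)
      assume "\<not> k2 - k1 + C0' > n"
      then have le: "(k2 - k1) + C0' \<le> n" by simp
      have y: "absv ((F ^^ k1) c' - c) < r" using that by (simp add: T_def)
      have "(F ^^ ((k2 - k1) + k1)) c' = (F ^^ (k2 - k1)) ((F ^^ k1) c')"
        by (simp only: funpow_add comp_def)
      moreover have "(k2 - k1) + k1 = k2" using that(3) by simp
      ultimately have "(F ^^ (k2 - k1)) ((F ^^ k1) c') = (F ^^ k2) c'" by simp
      then have ym: "absv ((F ^^ (k2 - k1)) ((F ^^ k1) c') - c) < r" using that by (simp add: T_def)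
      show False by (rule noret[OF y _ le ym]) (use that(3) in simp)
    qed
    have Tsub: "T c' \<subseteq> {Min (T c'), Max (T c')}" for c'
    proof
      fix k assume k: "k \<in> T c'"
      have fin: "finite (T c')" unfolding T_def by (rule finite_subset[of _ "{..n}"]) auto
      have mn: "Min (T c') \<le> k" "k \<le> Max (T c')" using fin k by auto
      have mnT: "Min (T c') \<in> T c'" "Max (T c') \<in> T c'" using fin k by (auto intro: Min_in Max_in)
      show "k \<in> {Min (T c'), Max (T c')}"
      proof (rule ccontr)
        assume "k \<notin> {Min (T c'), Max (T c')}"
        then have lt: "Min (T c') < k" "k < Max (T c')" using mn by auto
        have g1: "k - Min (T c') + C0' > n" by (rule gap[OF mnT(1) k lt(1)])
        have g2: "Max (T c') - k + C0' > n" by (rule gap[OF k mnT(2) lt(2)])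
        have "Max (T c') \<le> n" "1 \<le> Min (T c')" using mnT by (auto simp: T_def)
        then show False using g1 g2 lt nN unfolding N_def by linarith
      qed
    qed
    define g where "g = (\<lambda>(c', b). (F ^^ (if b then Min (T c') else Max (T c'))) c')"
    have sub: "critvals f n \<inter> Ds absv f (real n) c \<subseteq> g ` (crit f \<times> (UNIV :: bool set))"
    proof
      fix v assume v: "v \<in> critvals f n \<inter> Ds absv f (real n) c"
      then have "v \<in> (\<lambda>(c, k). (F ^^ k) c) ` (crit f \<times> {1..n})" using critvals_sub[of n] by blast
      then obtain c' k where ck: "c' \<in> crit f" "k \<in> {1..n}" "v = (F ^^ k) c'"
        by auto
      have kT: "k \<in> T c'" using ck v Dse by (auto simp: T_def)
      then have "k = Min (T c') \<or> k = Max (T c')" using Tsub by blast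
      then show "v \<in> g ` (crit f \<times> UNIV)"
      proof
        assume "k = Min (T c')"
        then have "v = g (c', True)" using ck by (simp add: g_def)
        then show ?thesis using ck by blast
      next
        assume "k = Max (T c')"
        then have "v = g (c', False)" using ck by (simp add: g_def)
        then show ?thesis using ck by blast
      qed
    qed
    have "card (critvals f n \<inter> Ds absv f (real n) c) \<le> card (g ` (crit f \<times> (UNIV :: bool set)))"
      by (rule card_mono) (use crit_finite sub in auto)
    also have "\<dots> \<le> card (crit f \<times> (UNIV :: bool set))" by (rule card_image_le) (use crit_finite in simp)
    also have "\<dots> = 2 * card (crit f)" by (simp add: card_cartesian_product)
    finally show "card (critvals f n \<inter> Ds absv f (real n) c) \<le> 2 * card (crit f)" .
  qed
qed

lemma main_dyn:
  assumes CJ: "crit f \<inter> juliaK absv f \<noteq> {}"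
  shows "\<exists>M N :: nat. M \<ge> 1 \<and> N \<ge> 1 \<and>
    (\<forall>c \<in> crit f \<inter> juliaK absv f. \<forall>n \<ge> N.
       finite (critvals f n \<inter> Ds absv f (real n) c) \<and>
       card (critvals f n \<inter> Ds absv f (real n) c) \<le> M)"
proof -
  obtain c0 where c0: "c0 \<in> crit f \<inter> juliaK absv f" using CJ by blast
  have Kne: "KK \<noteq> {}" using c0 by (auto simp: juliaK_def)
  have fin: "finite (critvals f n \<inter> X)" for n X using critvals_finite by blast
  consider (z) "RR = 0" | (s) "RR > 0" "XX \<le> 1" | (b) "RR > 0" "XX > 1"
    using R_props(1)[OF Kne] by force
  then show ?thesis
  proof cases
    case z
    have e: "Ds absv f (real n) c = {}" for n c
    proof (rule equals0I)
      fix y assume "y \<in> Ds absv f (real n) c"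
      then have "absv (y - c) < RR * XX powr (- real n)" by (simp add: Ds_def)
      then have "absv (y - c) < 0" using z by simp
      then show False using av_nonneg[of "y - c"] by linarith
    qed
    show ?thesis
    proof (intro exI[of _ 1] conjI ballI allI impI)
      fix c n show "finite (critvals f n \<inter> Ds absv f (real n) c)" by (rule fin)
      show "card (critvals f n \<inter> Ds absv f (real n) c) \<le> 1" by (simp add: e)
    qed simp_all
  next
    case s
    then have False using small_xi_false[OF Kne] c0 by blast
    then show ?thesis ..
  next
    case b
    obtain N where N: "N \<ge> 1" "\<forall>c\<in>crit f \<inter> juliaK absv f. \<forall>n\<ge>N.
            card (critvals f n \<inter> Ds absv f (real n) c) \<le> 2 * card (crit f)"
      using main_case[OF Kne b] by blast
    have P: "\<forall>c\<in>crit f \<inter> juliaK absv f. \<forall>n\<ge>N. finite (critvals f n \<inter> Ds absv f (real n) c) \<and>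
        card (critvals f n \<inter> Ds absv f (real n) c) \<le> 2 * card (crit f) + 1"
    proof (intro ballI allI impI conjI)
      fix c n assume cn: "c \<in> crit f \<inter> juliaK absv f" "N \<le> n"
      have A: "card (critvals f n \<inter> Ds absv f (real n) c) \<le> 2 * card (crit f)" using N(2) cn by blast
      show "card (critvals f n \<inter> Ds absv f (real n) c) \<le> 2 * card (crit f) + 1" using A by simp
      show "finite (critvals f n \<inter> Ds absv f (real n) c)" by (rule fin)
    qed
    have M1: "2 * card (crit f) + 1 \<ge> 1" by simp
    show ?thesis using P M1 N(1) by blast
  qed
qed

end

theorem lemma2p8:
  fixes absv :: "'a::field_char_0 \<Rightarrow> real" and f :: "'a poly"
  assumes "nonarch_complete_acf absv"
    and "degree f \<ge> 2"
    and "crit f \<inter> juliaK absv f \<noteq> {}"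
  shows "\<exists>M N :: nat. M \<ge> 1 \<and> N \<ge> 1 \<and>
    (\<forall>c \<in> crit f \<inter> juliaK absv f. \<forall>n \<ge> N.
       finite (critvals f n \<inter> Ds absv f (real n) c) \<and>
       card (critvals f n \<inter> Ds absv f (real n) c) \<le> M)"
proof -
  interpret dyn absv f by unfold_locales (use assms in auto)
  show ?thesis by (rule main_dyn[OF assms(3)])
qed

end
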